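(* Let $d\ge2$, $0<s<1$, $\beta(\theta)=\dfrac{|\cos(\theta/2)|}{|\sin(\theta/2)|^{1+2s}}$ for $0<|\theta|\le\pi/4$, and $$l_{1;d}(v,\xi)=\int_{|\theta|\le\pi/4}\beta(\theta)\Bigl[1-\frac{\exp\bigl(-2\tan^2(\frac\theta2)(|\xi|^2+\frac{|v|^2}4)\bigr)}{\cos^{2d}(\frac\theta2)}\Bigr]d\theta .$$ Then $l_{1;d}\in\mathbf S^s(\mathbb R^{2d})$, and there exist real numbers $(c_{k,d})_{k\ge1}$ such that for all $N\ge1$, $$l_{1;d}-\Bigl(c_0\lambda^s-d_0+\sum_{k=1}^Nc_{k,d}\lambda^{s-k}\Bigr)\in\mathbf S^{s-N-1}(\mathbb R^{2d}),\qquad\lambda=1+|\xi|^2+\tfrac{|v|^2}4,$$ where $c_0=\frac{2^{1+s}}{s}\Gamma(1-s)$ and $d_0=\frac{2^{1+s}(2+\sqrt2)^s}{s}$.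
   Context: Symbol classes: $\mathbf S^m(\mathbb R^{2d})$ is the set of smooth $a(v,\xi)$ on $\mathbb R^d\times\mathbb R^d$ with $|\partial_v^\alpha\partial_\xi^\beta a(v,\xi)|\le C_{\alpha\beta}\langle(v,\xi)\rangle^{2m-|\alpha|-|\beta|}$ for all multi-indices, $\langle(v,\xi)\rangle=(1+|v|^2+|\xi|^2)^{1/2}$. *)

theory Defs
  imports "HOL-Analysis.Analysis"
begin

text \<open>Multi-index derivatives \<partial>_v^\<alpha> \<partial>_\<xi>^\<beta> on R^d x R^d are exactly the iterated
  partial derivatives along lists of coordinate (Basis) vectors of the product
  space, with |\<alpha>|+|\<beta>| = length of the list.\<close>

definition dderiv :: "'b::euclidean_space \<Rightarrow> ('b \<Rightarrow> real) \<Rightarrow> 'b \<Rightarrow> real" where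
  "dderiv e f z = deriv (\<lambda>t. f (z + t *\<^sub>R e)) 0"

fun iter_dderiv :: "'b::euclidean_space list \<Rightarrow> ('b \<Rightarrow> real) \<Rightarrow> 'b \<Rightarrow> real" where
  "iter_dderiv [] f = f"
| "iter_dderiv (e # es) f = dderiv e (iter_dderiv es f)"

definition smooth_fun :: "('b::euclidean_space \<Rightarrow> real) \<Rightarrow> bool" where
  "smooth_fun f \<longleftrightarrow>
     (\<forall>es. set es \<subseteq> Basis \<longrightarrow>
        continuous_on UNIV (iter_dderiv es f) \<and>
        (\<forall>e\<in>Basis. \<forall>z. (\<lambda>t. iter_dderiv es f (z + t *\<^sub>R e)) differentiable (at 0)))"

definition symbol_class :: "real \<Rightarrow> ('a::euclidean_space \<times> 'a \<Rightarrow> real) \<Rightarrow> bool" where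
  "symbol_class m a \<longleftrightarrow> smooth_fun a \<and>
     (\<forall>es. set es \<subseteq> Basis \<longrightarrow>
        (\<exists>C. \<forall>z. \<bar>iter_dderiv es a z\<bar> \<le>
              C * (sqrt (1 + (norm z)\<^sup>2)) powr (2 * m - real (length es))))"

definition beta_s :: "real \<Rightarrow> real \<Rightarrow> real" where
  "beta_s s \<theta> = abs (cos (\<theta>/2)) / (abs (sin (\<theta>/2)) powr (1 + 2 * s))"

text \<open>l_{1;d}(v,\<xi>), with d = DIM('a).\<close>
definition l1 :: "real \<Rightarrow> 'a::euclidean_space \<times> 'a \<Rightarrow> real" where
  "l1 s z =
     set_lebesgue_integral lborel {-pi/4..pi/4} (\<lambda>\<theta>.
        beta_s s \<theta> * (1 - exp (- 2 * (tan (\<theta>/2))\<^sup>2 * ((norm (snd z))\<^sup>2 + (norm (fst z))\<^sup>2 / 4))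
                          / (cos (\<theta>/2)) ^ (2 * DIM('a))))"

end

theory Submission
  imports Defs
begin

definition lamf :: "'a::euclidean_space \<times> 'a \<Rightarrow> real" where
  "lamf z = 1 + (norm (snd z))\<^sup>2 + (norm (fst z))\<^sup>2 / 4"

definition br :: "'b::euclidean_space \<Rightarrow> real" where
  "br z = sqrt (1 + (norm z)\<^sup>2)"

lemma br_ge1: "1 \<le> br z"
  unfolding br_def by simp

lemma br_pos: "0 < br z"
  using br_ge1[of z] by linarith

lemma norm_le_br: "norm z \<le> br z"
  unfolding br_def by (simp add: real_le_rsqrt)

inductive pd :: "int \<Rightarrow> ('b::euclidean_space \<Rightarrow> real) \<Rightarrow> bool" where
  pd_zero: "pd k (\<lambda>_. 0)"
| pd_const: "0 \<le> k \<Longrightarrow> pd k (\<lambda>_. c)"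
| pd_lin: "1 \<le> k \<Longrightarrow> pd k (\<lambda>z. inner a z)"
| pd_add: "pd k f \<Longrightarrow> pd k g \<Longrightarrow> pd k (\<lambda>z. f z + g z)"
| pd_mult: "pd k f \<Longrightarrow> pd l g \<Longrightarrow> pd (k + l) (\<lambda>z. f z * g z)"

lemma pd_mono: "pd k f \<Longrightarrow> k \<le> k' \<Longrightarrow> pd k' f"
proof (induction arbitrary: k' rule: pd.induct)
  case (pd_mult k f l g)
  have "pd (k' - l) f" using pd_mult by simp
  from pd.pd_mult[OF this pd_mult.hyps(2)] show ?case by simp
qed (auto intro: pd.intros)

lemma pd_bound: "pd k f \<Longrightarrow> \<exists>C\<ge>0. \<forall>z. \<bar>f z\<bar> \<le> C * br z powr (real_of_int k)"
proof (induction rule: pd.induct)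
  case (pd_zero k)
  then show ?case by (intro exI[of _ 0]) auto
next
  case (pd_const k c)
  show ?case
  proof (intro exI[of _ "\<bar>c\<bar>"] conjI allI)
    fix z
    have "1 \<le> br z powr (real_of_int k)"
      using pd_const br_ge1 by (intro ge_one_powr_ge_zero) auto
    then show "\<bar>c\<bar> \<le> \<bar>c\<bar> * br z powr (real_of_int k)"
      by (metis abs_ge_zero mult.right_neutral mult_left_mono)
  qed simp
next
  case (pd_lin k a)
  show ?case
  proof (intro exI[of _ "norm a"] conjI allI)
    fix z
    have "\<bar>inner a z\<bar> \<le> norm a * norm z" by (rule Cauchy_Schwarz_ineq2)
    also have "\<dots> \<le> norm a * br z" by (intro mult_left_mono norm_le_br) auto
    also have "br z = br z powr 1" using br_pos[of z] by simp
    also have "\<dots> \<le> br z powr (real_of_int k)"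
      using pd_lin br_ge1 by (intro powr_mono) auto
    finally show "\<bar>inner a z\<bar> \<le> norm a * br z powr (real_of_int k)"
      by (simp add: mult_left_mono)
  qed simp
next
  case (pd_add k f g)
  then obtain C1 C2 where C: "C1 \<ge> 0" "C2 \<ge> 0" "\<forall>z. \<bar>f z\<bar> \<le> C1 * br z powr (real_of_int k)"
     "\<forall>z. \<bar>g z\<bar> \<le> C2 * br z powr (real_of_int k)" by blast
  show ?case
    by (intro exI[of _ "C1 + C2"]) (use C in \<open>auto simp: distrib_right intro: abs_triangle_ineq[THEN order_trans] add_mono\<close>)
next
  case (pd_mult k f l g)
  then obtain C1 C2 where C: "C1 \<ge> 0" "C2 \<ge> 0" "\<forall>z. \<bar>f z\<bar> \<le> C1 * br z powr (real_of_int k)"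
     "\<forall>z. \<bar>g z\<bar> \<le> C2 * br z powr (real_of_int l)" by blast
  show ?case
  proof (intro exI[of _ "C1 * C2"] conjI allI)
    fix z
    have "\<bar>f z * g z\<bar> = \<bar>f z\<bar> * \<bar>g z\<bar>" by (simp add: abs_mult)
    also have "\<dots> \<le> (C1 * br z powr (real_of_int k)) * (C2 * br z powr (real_of_int l))"
      using C by (intro mult_mono) auto
    also have "\<dots> = C1 * C2 * br z powr (real_of_int (k + l))"
      by (simp add: powr_add)
    finally show "\<bar>f z * g z\<bar> \<le> C1 * C2 * br z powr (real_of_int (k + l))" .
  qed (use C in auto)
qed

lemma pd_cont: "pd k f \<Longrightarrow> continuous_on UNIV f"
  by (induction rule: pd.induct) (auto intro!: continuous_intros)

lemma pd_deriv:
  "pd k f \<Longrightarrow> \<exists>f'. pd (k - 1) f' \<and> (\<forall>z. ((\<lambda>t. f (z + t *\<^sub>R e)) has_real_derivative f' z) (at 0))"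
proof (induction rule: pd.induct)
  case (pd_zero k)
  then show ?case by (intro exI[of _ "\<lambda>_. 0"]) (auto intro: pd.intros)
next
  case (pd_const k c)
  then show ?case by (intro exI[of _ "\<lambda>_. 0"]) (auto intro: pd.intros)
next
  case (pd_lin k a)
  show ?case
  proof (intro exI[of _ "\<lambda>_. inner a e"] conjI allI)
    show "pd (k - 1) (\<lambda>_. inner a e)" using pd_lin by (intro pd_const) auto
    fix z
    have "((\<lambda>t. inner a z + t * inner a e) has_real_derivative inner a e) (at 0)"
      by (auto intro!: derivative_eq_intros)
    then show "((\<lambda>t. inner a (z + t *\<^sub>R e)) has_real_derivative inner a e) (at 0)"
      by (simp add: inner_add_right)
  qed
next
  case (pd_add k f g)
  then obtain f' g' where "pd (k-1) f'" "pd (k-1) g'"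
    "\<forall>z. ((\<lambda>t. f (z + t *\<^sub>R e)) has_real_derivative f' z) (at 0)"
    "\<forall>z. ((\<lambda>t. g (z + t *\<^sub>R e)) has_real_derivative g' z) (at 0)" by blast
  then show ?case
    by (intro exI[of _ "\<lambda>z. f' z + g' z"]) (auto intro: pd.intros DERIV_add)
next
  case (pd_mult k f l g)
  then obtain f' g' where d: "pd (k-1) f'" "pd (l-1) g'"
    "\<forall>z. ((\<lambda>t. f (z + t *\<^sub>R e)) has_real_derivative f' z) (at 0)"
    "\<forall>z. ((\<lambda>t. g (z + t *\<^sub>R e)) has_real_derivative g' z) (at 0)" by blast
  show ?case
  proof (intro exI[of _ "\<lambda>z. f' z * g z + f z * g' z"] conjI allI)
    have "pd ((k-1) + l) (\<lambda>z. f' z * g z)" by (rule pd.pd_mult) (use d pd_mult in auto)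
    moreover have "pd (k + (l-1)) (\<lambda>z. f z * g' z)" by (rule pd.pd_mult) (use d pd_mult in auto)
    ultimately show "pd (k + l - 1) (\<lambda>z. f' z * g z + f z * g' z)"
      by (intro pd_add) (auto simp: algebra_simps)
    fix z
    from DERIV_mult[OF d(3)[rule_format, of z] d(4)[rule_format, of z]]
    show "((\<lambda>t. f (z + t *\<^sub>R e) * g (z + t *\<^sub>R e)) has_real_derivative f' z * g z + f z * g' z) (at 0)"
      by (simp add: mult.commute)
  qed
qed

definition lin_e :: "'a::euclidean_space \<times> 'a \<Rightarrow> 'a \<times> 'a" where
  "lin_e e = ((1/2) *\<^sub>R fst e, 2 *\<^sub>R snd e)"

lemma lamf_line:
  "lamf (z + t *\<^sub>R e) = lamf z + t * inner (lin_e e) z + t^2 * ((norm (snd e))\<^sup>2 + (norm (fst e))\<^sup>2/4)"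
  unfolding lamf_def lin_e_def power2_norm_eq_inner
  by (cases z; cases e) (simp add: inner_add_left inner_add_right inner_commute algebra_simps power2_eq_square)

lemma lamf_deriv:
  "((\<lambda>t. lamf (z + t *\<^sub>R e)) has_real_derivative inner (lin_e e) z) (at 0)"
proof -
  have "((\<lambda>t. lamf z + t * inner (lin_e e) z + t^2 * ((norm (snd e))\<^sup>2 + (norm (fst e))\<^sup>2/4))
     has_real_derivative inner (lin_e e) z) (at 0)"
    by (auto intro!: derivative_eq_intros)
  then show ?thesis by (simp add: lamf_line)
qed

lemma lamf_ge1: "1 \<le> lamf z"
  unfolding lamf_def by simp

lemma lamf_cont: "continuous_on UNIV lamf"
  unfolding lamf_def by (intro continuous_intros) auto

lemma step_exists:
  fixes P :: "nat \<Rightarrow> 'a::euclidean_space \<times> 'a \<Rightarrow> real"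
  assumes Hd: "\<forall>j x. 1/2 < x \<longrightarrow> (H j has_real_derivative H (Suc j) x) (at x)"
    and P: "\<forall>j. pd (2 * int j - int n) (P j)" "\<forall>j>n. P j = (\<lambda>_. 0)"
  shows "\<exists>Q. (\<forall>j. pd (2 * int j - int (Suc n)) (Q j)) \<and> (\<forall>j>Suc n. Q j = (\<lambda>_. 0)) \<and>
    (\<forall>z. ((\<lambda>t. \<Sum>j\<le>n. H j (lamf (z + t *\<^sub>R e)) * P j (z + t *\<^sub>R e)) has_real_derivative
         (\<Sum>j\<le>Suc n. H j (lamf z) * Q j z)) (at 0))"
proof -
  have "\<forall>j. \<exists>f'. pd (2 * int j - int n - 1) f' \<and>
      (\<forall>z. ((\<lambda>t. P j (z + t *\<^sub>R e)) has_real_derivative f' z) (at 0)) \<and> (n < j \<longrightarrow> f' = (\<lambda>_. 0))"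
  proof
    fix j
    show "\<exists>f'. pd (2 * int j - int n - 1) f' \<and>
      (\<forall>z. ((\<lambda>t. P j (z + t *\<^sub>R e)) has_real_derivative f' z) (at 0)) \<and> (n < j \<longrightarrow> f' = (\<lambda>_. 0))"
    proof (cases "n < j")
      case True
      then show ?thesis using P(2) by (intro exI[of _ "\<lambda>_. 0"]) (auto intro: pd_zero)
    next
      case False
      from pd_deriv[OF P(1)[rule_format, of j], of e] False show ?thesis by auto
    qed
  qed
  then obtain P' where P': "\<And>j. pd (2 * int j - int n - 1) (P' j)"
    "\<And>j z. ((\<lambda>t. P j (z + t *\<^sub>R e)) has_real_derivative P' j z) (at 0)"
    "\<And>j. n < j \<Longrightarrow> P' j = (\<lambda>_. 0)"
    by metis
  define Q where "Q j = (\<lambda>z. (if j = 0 then 0 else inner (lin_e e) z * P (j-1) z) + P' j z)" for j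
  show ?thesis
  proof (intro exI[of _ Q] conjI allI impI)
    fix j
    show "pd (2 * int j - int (Suc n)) (Q j)"
    proof (cases j)
      case 0
      have "pd (2 * int j - int (Suc n)) (P' 0)" by (rule pd_mono[OF P'(1)[of 0]]) (simp add: 0)
      from pd_add[OF pd_zero this] show ?thesis unfolding Q_def using 0 by simp
    next
      case (Suc i)
      have "pd (1 + (2 * int i - int n)) (\<lambda>z. inner (lin_e e) z * P i z)"
        by (intro pd_mult pd_lin P(1)[rule_format]) auto
      moreover have "1 + (2 * int i - int n) = 2 * int j - int (Suc n)" using Suc by simp
      ultimately have "pd (2 * int j - int (Suc n)) (\<lambda>z. inner (lin_e e) z * P i z)" by simp
      moreover have "pd (2 * int j - int (Suc n)) (P' j)" by (rule pd_mono[OF P'(1)[of j]]) simp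
      ultimately have "pd (2 * int j - int (Suc n)) (\<lambda>z. inner (lin_e e) z * P i z + P' j z)"
        by (rule pd_add)
      then show ?thesis unfolding Q_def using Suc by simp
    qed
  next
    fix j assume "Suc n < j"
    then show "Q j = (\<lambda>_. 0)" unfolding Q_def using P(2) P'(3) by (auto simp: fun_eq_iff)
  next
    fix z
    have d: "((\<lambda>t. H j (lamf (z + t *\<^sub>R e)) * P j (z + t *\<^sub>R e)) has_real_derivative
        H (Suc j) (lamf z) * inner (lin_e e) z * P j z + H j (lamf z) * P' j z) (at 0)" for j
    proof -
      have h: "(H j has_real_derivative H (Suc j) (lamf z)) (at (lamf (z + 0 *\<^sub>R e)))"
        using Hd lamf_ge1[of z] by simp
      have "((\<lambda>t. H j (lamf (z + t *\<^sub>R e))) has_real_derivative H (Suc j) (lamf z) * inner (lin_e e) z) (at 0)"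
        by (rule DERIV_chain2[OF h lamf_deriv])
      from DERIV_mult[OF this P'(2)[of j z]] show ?thesis by (simp add: mult.commute)
    qed
    have "((\<lambda>t. \<Sum>j\<le>n. H j (lamf (z + t *\<^sub>R e)) * P j (z + t *\<^sub>R e)) has_real_derivative
        (\<Sum>j\<le>n. H (Suc j) (lamf z) * inner (lin_e e) z * P j z + H j (lamf z) * P' j z)) (at 0)"
      by (rule DERIV_sum) (rule d)
    also have "(\<Sum>j\<le>n. H (Suc j) (lamf z) * inner (lin_e e) z * P j z + H j (lamf z) * P' j z)
       = (\<Sum>j\<le>Suc n. H j (lamf z) * Q j z)"
    proof -
      have "(\<Sum>j\<le>Suc n. H j (lamf z) * Q j z) =
        (\<Sum>j\<le>Suc n. H j (lamf z) * (if j = 0 then 0 else inner (lin_e e) z * P (j-1) z))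
        + (\<Sum>j\<le>Suc n. H j (lamf z) * P' j z)"
        unfolding Q_def by (simp add: sum.distrib distrib_left)
      also have "(\<Sum>j\<le>Suc n. H j (lamf z) * (if j = 0 then 0 else inner (lin_e e) z * P (j-1) z))
          = (\<Sum>j\<le>n. H (Suc j) (lamf z) * inner (lin_e e) z * P j z)"
        by (subst sum.atMost_Suc_shift) (simp add: mult.assoc)
      also have "(\<Sum>j\<le>Suc n. H j (lamf z) * P' j z) = (\<Sum>j\<le>n. H j (lamf z) * P' j z)"
        using P'(3)[of "Suc n"] by simp
      finally show ?thesis by (simp add: sum.distrib)
    qed
    finally show "((\<lambda>t. \<Sum>j\<le>n. H j (lamf (z + t *\<^sub>R e)) * P j (z + t *\<^sub>R e)) has_real_derivative
         (\<Sum>j\<le>Suc n. H j (lamf z) * Q j z)) (at 0)" .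
  qed
qed

lemma comp_repr:
  fixes H :: "nat \<Rightarrow> real \<Rightarrow> real"
  assumes Hd: "\<forall>j x. 1/2 < x \<longrightarrow> (H j has_real_derivative H (Suc j) x) (at x)"
  shows "\<exists>P::nat \<Rightarrow> 'a::euclidean_space \<times> 'a \<Rightarrow> real.
    (\<forall>j. pd (2 * int j - int (length es)) (P j)) \<and> (\<forall>j>length es. P j = (\<lambda>_. 0)) \<and>
    iter_dderiv es (\<lambda>z. H 0 (lamf z)) = (\<lambda>z. \<Sum>j\<le>length es. H j (lamf z) * P j z)"
proof (induction es)
  case Nil
  show ?case
    by (intro exI[of _ "\<lambda>j. if j = 0 then (\<lambda>_. 1) else (\<lambda>_. 0)"]) (auto simp: pd_const pd_zero)
next
  case (Cons e es)
  then obtain P :: "nat \<Rightarrow> 'a \<times> 'a \<Rightarrow> real" where P: "\<forall>j. pd (2 * int j - int (length es)) (P j)"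
    "\<forall>j>length es. P j = (\<lambda>_. 0)"
    "iter_dderiv es (\<lambda>z. H 0 (lamf z)) = (\<lambda>z. \<Sum>j\<le>length es. H j (lamf z) * P j z)" by blast
  from step_exists[OF Hd P(1) P(2), of e] obtain Q where Q:
    "\<forall>j. pd (2 * int j - int (Suc (length es))) (Q j)" "\<forall>j>Suc (length es). Q j = (\<lambda>_. 0)"
    "\<forall>z. ((\<lambda>t. \<Sum>j\<le>length es. H j (lamf (z + t *\<^sub>R e)) * P j (z + t *\<^sub>R e)) has_real_derivative
         (\<Sum>j\<le>Suc (length es). H j (lamf z) * Q j z)) (at 0)" by blast
  show ?case
  proof (intro exI[of _ Q] conjI)
    show "iter_dderiv (e # es) (\<lambda>z. H 0 (lamf z)) = (\<lambda>z. \<Sum>j\<le>length (e # es). H j (lamf z) * Q j z)"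
      unfolding iter_dderiv.simps P(3) dderiv_def
      using Q(3) by (auto intro!: DERIV_imp_deriv)
  qed (use Q in auto)
qed

lemma br_sq: "(br z)\<^sup>2 = 1 + (norm z)\<^sup>2"
  unfolding br_def by simp

lemma lamf_bounds: "(br z)\<^sup>2 / 4 \<le> lamf z" "lamf z \<le> (br z)\<^sup>2"
  unfolding br_sq lamf_def by (cases z; simp add: norm_Pair)+

lemma lamf_powr_le: "lamf z powr p \<le> 4 powr \<bar>p\<bar> * br z powr (2 * p)"
proof -
  have B: "br z powr (2 * p) = ((br z)\<^sup>2) powr p"
    using br_pos[of z] by (simp add: powr_powr[symmetric] powr_realpow)
  have l0: "0 < lamf z" using lamf_ge1[of z] by linarith
  show ?thesis
  proof (cases "0 \<le> p")
    case True
    have 1: "lamf z powr p \<le> ((br z)\<^sup>2) powr p"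
      by (rule powr_mono2) (use True lamf_bounds(2)[of z] l0 in auto)
    have "1 \<le> 4 powr \<bar>p\<bar>" by (rule ge_one_powr_ge_zero) auto
    then have "((br z)\<^sup>2) powr p \<le> 4 powr \<bar>p\<bar> * ((br z)\<^sup>2) powr p"
      by (metis mult_1 mult_right_mono powr_ge_zero)
    with 1 show ?thesis unfolding B by linarith
  next
    case False
    have 1: "lamf z powr p \<le> ((br z)\<^sup>2 / 4) powr p"
      by (rule powr_mono2') (use lamf_bounds(1)[of z] False br_pos[of z] in auto)
    have e1: "((br z)\<^sup>2 / 4) powr p = (br z)\<^sup>2 powr p / 4 powr p" by (rule powr_divide)
    have e2: "4 powr \<bar>p\<bar> = 1 / 4 powr p" using False powr_minus_divide[of 4 p] by simp
    have "(br z)\<^sup>2 powr p / 4 powr p = 4 powr \<bar>p\<bar> * (br z)\<^sup>2 powr p" unfolding e2 by simp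
    with 1 e1 show ?thesis unfolding B by simp
  qed
qed

lemma symbol_comp:
  fixes H :: "nat \<Rightarrow> real \<Rightarrow> real"
  assumes Hd: "\<forall>j x. 1/2 < x \<longrightarrow> (H j has_real_derivative H (Suc j) x) (at x)"
    and HB: "\<forall>j. \<exists>C. \<forall>x\<ge>1. \<bar>H j x\<bar> \<le> C * x powr (m - real j)"
  shows "symbol_class m (\<lambda>z::'a::euclidean_space \<times> 'a. H 0 (lamf z))"
proof -
  have contH: "isCont (\<lambda>z::'a \<times> 'a. H j (lamf z)) z" for j z
  proof (rule isCont_o2[where g="H j"])
    show "isCont lamf z" using lamf_cont continuous_on_eq_continuous_at by blast
    have "1/2 < lamf z" using lamf_ge1[of z] by linarith
    then show "isCont (H j) (lamf z)" using Hd by (meson DERIV_isCont)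
  qed
  from choice[OF HB] obtain C where C0: "\<forall>j. \<forall>x\<ge>1. \<bar>H j x\<bar> \<le> C j * x powr (m - real j)"
    by blast
  have C: "\<bar>H j x\<bar> \<le> C j * x powr (m - real j)" if "1 \<le> x" for j x using C0 that by blast
  have C': "\<bar>H j x\<bar> \<le> \<bar>C j\<bar> * x powr (m - real j)" if "1 \<le> x" for j x
    using C[OF that, of j] by (smt (verit) mult_right_mono powr_ge_zero)
  show ?thesis
    unfolding symbol_class_def smooth_fun_def
  proof (intro conjI allI impI ballI)
    fix es :: "('a \<times> 'a) list"
    obtain P where P: "\<forall>j. pd (2 * int j - int (length es)) (P j)" "\<forall>j>length es. P j = (\<lambda>_. 0)"
      and eq: "iter_dderiv es (\<lambda>z. H 0 (lamf z)) = (\<lambda>z. \<Sum>j\<le>length es. H j (lamf z) * P j z)"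
      using comp_repr[OF Hd, of es] by blast
    show "continuous_on UNIV (iter_dderiv es (\<lambda>z. H 0 (lamf z)))"
      unfolding eq
      by (intro continuous_on_sum continuous_on_mult ballI continuous_at_imp_continuous_on contH
           pd_cont[OF P(1)[rule_format]])
    {
      fix e z
      from step_exists[OF Hd P(1) P(2), of e] obtain Q where
        "\<forall>z. ((\<lambda>t. \<Sum>j\<le>length es. H j (lamf (z + t *\<^sub>R e)) * P j (z + t *\<^sub>R e)) has_real_derivative
         (\<Sum>j\<le>Suc (length es). H j (lamf z) * Q j z)) (at 0)" by blast
      then show "(\<lambda>t. iter_dderiv es (\<lambda>z. H 0 (lamf z)) (z + t *\<^sub>R e)) differentiable at 0"
        unfolding eq by (meson has_field_derivative_imp_has_derivative differentiableI)
    }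
    have "\<forall>j. \<exists>Dj\<ge>0. \<forall>z. \<bar>P j z\<bar> \<le> Dj * br z powr (real_of_int (2 * int j - int (length es)))"
      using P(1) pd_bound by blast
    from choice[OF this] obtain D where D0: "\<forall>j. D j \<ge> 0 \<and> (\<forall>z. \<bar>P j z\<bar> \<le> D j * br z powr (real_of_int (2 * int j - int (length es))))"
      by blast
    have D: "\<And>j. D j \<ge> 0" "\<And>j z. \<bar>P j z\<bar> \<le> D j * br z powr (real_of_int (2 * int j - int (length es)))"
      using D0 by auto
    let ?K = "\<Sum>j\<le>length es. \<bar>C j\<bar> * 4 powr \<bar>m - real j\<bar> * D j"
    show "\<exists>K. \<forall>z. \<bar>iter_dderiv es (\<lambda>z. H 0 (lamf z)) z\<bar>
        \<le> K * sqrt (1 + (norm z)\<^sup>2) powr (2 * m - real (length es))"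
    proof (intro exI[of _ ?K] allI)
      fix z :: "'a \<times> 'a"
      have "\<bar>iter_dderiv es (\<lambda>z. H 0 (lamf z)) z\<bar> \<le> (\<Sum>j\<le>length es. \<bar>H j (lamf z) * P j z\<bar>)"
        unfolding eq by (rule sum_abs)
      also have "\<dots> \<le> (\<Sum>j\<le>length es. \<bar>C j\<bar> * 4 powr \<bar>m - real j\<bar> * D j * br z powr (2 * m - real (length es)))"
      proof (rule sum_mono)
        fix j assume "j \<in> {..length es}"
        have "\<bar>H j (lamf z) * P j z\<bar> = \<bar>H j (lamf z)\<bar> * \<bar>P j z\<bar>" by (simp add: abs_mult)
        also have "\<dots> \<le> (\<bar>C j\<bar> * lamf z powr (m - real j)) * (D j * br z powr (real_of_int (2 * int j - int (length es))))"
          using C'[OF lamf_ge1, of j z] D[of j] by (intro mult_mono) auto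
        also have "\<dots> \<le> (\<bar>C j\<bar> * (4 powr \<bar>m - real j\<bar> * br z powr (2 * (m - real j)))) * (D j * br z powr (real_of_int (2 * int j - int (length es))))"
          using D[of j] lamf_powr_le[of z "m - real j"] by (intro mult_right_mono mult_left_mono) auto
        also have "\<dots> = \<bar>C j\<bar> * 4 powr \<bar>m - real j\<bar> * D j * (br z powr (2 * (m - real j)) * br z powr (real_of_int (2 * int j - int (length es))))"
          by (simp add: algebra_simps)
        also have "br z powr (2 * (m - real j)) * br z powr (real_of_int (2 * int j - int (length es))) = br z powr (2 * m - real (length es))"
          by (simp add: powr_add[symmetric] algebra_simps)
        finally show "\<bar>H j (lamf z) * P j z\<bar> \<le> \<bar>C j\<bar> * 4 powr \<bar>m - real j\<bar> * D j * br z powr (2 * m - real (length es))" .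
      qed
      also have "\<dots> = ?K * sqrt (1 + (norm z)\<^sup>2) powr (2 * m - real (length es))"
        by (simp add: sum_distrib_right br_def)
      finally show "\<bar>iter_dderiv es (\<lambda>z. H 0 (lamf z)) z\<bar> \<le> ?K * sqrt (1 + (norm z)\<^sup>2) powr (2 * m - real (length es))" .
    qed
  qed
qed

lemma exp_quad_bound: "\<bar>exp u - 1 - u\<bar> \<le> u\<^sup>2 / 2 * exp \<bar>u\<bar>" for u :: real
proof -
  obtain t where t: "\<bar>t\<bar> \<le> \<bar>u\<bar>" "exp u = (\<Sum>m<2. u ^ m / fact m) + exp t / fact 2 * u ^ 2"
    using Maclaurin_exp_le[of u 2] by blast
  have e: "exp u - 1 - u = exp t / 2 * u\<^sup>2" using t(2) by (simp add: numeral_2_eq_2)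
  have nn: "0 \<le> exp t / 2 * u\<^sup>2" by simp
  have "\<bar>exp u - 1 - u\<bar> = exp t / 2 * u\<^sup>2" unfolding e by (rule abs_of_nonneg[OF nn])
  moreover have "exp t / 2 * u\<^sup>2 \<le> exp \<bar>u\<bar> / 2 * u\<^sup>2" using t(1) by (intro mult_right_mono divide_right_mono) auto
  ultimately show ?thesis by (simp add: mult_ac)
qed

lemma exp_diff_bound:
  fixes w x h :: real
  assumes "0 < w" "\<bar>h\<bar> \<le> x / 2"
  shows "\<bar>exp (- (2 * (x + h) * w)) - exp (- (2 * x * w)) + 2 * w * h * exp (- (2 * x * w))\<bar>
    \<le> 2 * w\<^sup>2 * h\<^sup>2 * exp (- (x * w))"
proof -
  let ?u = "- (2 * w * h)"
  have eq: "exp (- (2 * (x + h) * w)) - exp (- (2 * x * w)) + 2 * w * h * exp (- (2 * x * w))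
      = exp (- (2 * x * w)) * (exp ?u - 1 - ?u)"
    by (simp add: algebra_simps exp_add[symmetric])
  have "\<bar>exp (- (2 * x * w)) * (exp ?u - 1 - ?u)\<bar> = exp (- (2 * x * w)) * \<bar>exp ?u - 1 - ?u\<bar>"
    by (simp add: abs_mult)
  also have "\<dots> \<le> exp (- (2 * x * w)) * (?u\<^sup>2 / 2 * exp \<bar>?u\<bar>)"
    by (intro mult_left_mono exp_quad_bound) auto
  also have "\<dots> = 2 * w\<^sup>2 * h\<^sup>2 * (exp (- (2 * x * w)) * exp \<bar>?u\<bar>)"
    by (simp add: power2_eq_square algebra_simps)
  also have "\<dots> = 2 * w\<^sup>2 * h\<^sup>2 * exp (- (2 * x * w) + \<bar>?u\<bar>)"
    by (simp only: exp_add)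
  also have "\<dots> \<le> 2 * w\<^sup>2 * h\<^sup>2 * exp (- (x * w))"
  proof -
    have "\<bar>?u\<bar> = 2 * w * \<bar>h\<bar>" using assms by (simp add: abs_mult)
    also have "\<dots> \<le> 2 * w * (x/2)" using assms by (intro mult_left_mono) auto
    finally have "- (2 * x * w) + \<bar>?u\<bar> \<le> - (x * w)" by simp
    then show ?thesis by (intro mult_left_mono) auto
  qed
  finally show ?thesis using eq by simp
qed

lemma lap_deriv_gen:
  fixes K E :: "real \<Rightarrow> real"
  assumes supp: "\<And>w. K w \<noteq> 0 \<Longrightarrow> 0 < w"
    and I1: "\<And>y. 0 < y \<Longrightarrow> integrable lborel (\<lambda>w. w * K w * exp (- (y * w)))"
    and I2: "\<And>y. 0 < y \<Longrightarrow> integrable lborel (\<lambda>w. w\<^sup>2 * K w * exp (- (y * w)))"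
    and IE: "\<And>y. 0 < y \<Longrightarrow> integrable lborel (\<lambda>w. K w * (exp (- (2 * y * w)) - E w))"
    and x: "0 < x"
  shows "((\<lambda>x. \<integral>w. K w * (exp (- (2 * x * w)) - E w) \<partial>lborel) has_real_derivative
           (\<integral>w. - 2 * w * K w * exp (- (2 * x * w)) \<partial>lborel)) (at x)"
proof -
  define \<Phi> where "\<Phi> x = (\<integral>w. K w * (exp (- (2 * x * w)) - E w) \<partial>lborel)" for x
  define D where "D = (\<integral>w. - 2 * w * K w * exp (- (2 * x * w)) \<partial>lborel)"
  define M where "M = (\<integral>w. 2 * \<bar>w\<^sup>2 * K w * exp (- (x * w))\<bar> \<partial>lborel)"
  have intD: "integrable lborel (\<lambda>w. - 2 * w * K w * exp (- (2 * x * w)))"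
    using I1[of "2 * x"] x by (simp add: mult.assoc)
  have intM: "integrable lborel (\<lambda>w. 2 * \<bar>w\<^sup>2 * K w * exp (- (x * w))\<bar>)"
    using I2[OF x] by simp
  have key: "\<bar>\<Phi> (x + h) - \<Phi> x - h * D\<bar> \<le> h\<^sup>2 * M" if h: "\<bar>h\<bar> \<le> x / 2" for h
  proof -
    have xh: "0 < x + h" using h x by linarith
    have "\<Phi> (x + h) - \<Phi> x - h * D = (\<integral>w. K w * (exp (- (2 * (x + h) * w)) - E w)
        - K w * (exp (- (2 * x * w)) - E w) - h * (- 2 * w * K w * exp (- (2 * x * w))) \<partial>lborel)"
      unfolding \<Phi>_def D_def
      using IE[OF xh] IE[OF x] intD by (simp add: integral_diff)
    also have "\<dots> = (\<integral>w. K w * (exp (- (2 * (x + h) * w)) - exp (- (2 * x * w)) + 2 * w * h * exp (- (2 * x * w))) \<partial>lborel)"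
      by (intro Bochner_Integration.integral_cong) (auto simp: algebra_simps)
    finally have eq: "\<Phi> (x + h) - \<Phi> x - h * D = \<dots>" .
    have intF: "integrable lborel (\<lambda>w. K w * (exp (- (2 * (x + h) * w)) - exp (- (2 * x * w)) + 2 * w * h * exp (- (2 * x * w))))"
    proof -
      have "integrable lborel (\<lambda>w. K w * (exp (- (2 * (x + h) * w)) - E w)
        - K w * (exp (- (2 * x * w)) - E w) - h * (- 2 * w * K w * exp (- (2 * x * w))))"
        using IE[OF xh] IE[OF x] intD by auto
      then show ?thesis by (rule Bochner_Integration.integrable_cong[THEN iffD1, rotated 2]) (auto simp: algebra_simps)
    qed
    have "\<bar>\<Phi> (x + h) - \<Phi> x - h * D\<bar> \<le> (\<integral>w. h\<^sup>2 * (2 * \<bar>w\<^sup>2 * K w * exp (- (x * w))\<bar>) \<partial>lborel)"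
      unfolding eq
    proof (rule integral_abs_bound_integral)
      show "integrable lborel (\<lambda>w. h\<^sup>2 * (2 * \<bar>w\<^sup>2 * K w * exp (- (x * w))\<bar>))"
        using intM by simp
      fix w :: real
      show "\<bar>K w * (exp (- (2 * (x + h) * w)) - exp (- (2 * x * w)) + 2 * w * h * exp (- (2 * x * w)))\<bar>
          \<le> h\<^sup>2 * (2 * \<bar>w\<^sup>2 * K w * exp (- (x * w))\<bar>)"
      proof (cases "K w = 0")
        case False
        then have w: "0 < w" using supp by blast
        have "\<bar>K w * (exp (- (2 * (x + h) * w)) - exp (- (2 * x * w)) + 2 * w * h * exp (- (2 * x * w)))\<bar>
           = \<bar>K w\<bar> * \<bar>exp (- (2 * (x + h) * w)) - exp (- (2 * x * w)) + 2 * w * h * exp (- (2 * x * w))\<bar>"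
          by (simp add: abs_mult)
        also have "\<dots> \<le> \<bar>K w\<bar> * (2 * w\<^sup>2 * h\<^sup>2 * exp (- (x * w)))"
          by (intro mult_left_mono exp_diff_bound w h) auto
        also have "\<dots> = h\<^sup>2 * (2 * \<bar>w\<^sup>2 * K w * exp (- (x * w))\<bar>)"
          by (simp add: abs_mult algebra_simps)
        finally show ?thesis .
      qed simp
    qed (fact intF)
    also have "\<dots> = h\<^sup>2 * M" unfolding M_def by simp
    finally show ?thesis .
  qed
  have M0: "0 \<le> M" unfolding M_def by (intro Bochner_Integration.integral_nonneg) auto
  have "((\<lambda>h. (\<Phi> (x + h) - \<Phi> x) / h - D) \<longlongrightarrow> 0) (at 0)"
  proof (rule Lim_null_comparison)
    show "((\<lambda>h. M * \<bar>h\<bar>) \<longlongrightarrow> 0) (at 0)"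
      by (auto intro!: tendsto_eq_intros)
    have ev: "eventually (\<lambda>h. h \<noteq> 0 \<and> \<bar>h\<bar> < x / 2) (at (0::real))"
      unfolding eventually_at using x by (intro exI[of _ "x/2"]) (auto simp: dist_real_def)
    have bd: "norm ((\<Phi> (x + h) - \<Phi> x) / h - D) \<le> M * \<bar>h\<bar>" if h: "\<bar>h\<bar> \<le> x / 2" "h \<noteq> 0" for h
    proof -
      have "(\<Phi> (x + h) - \<Phi> x) / h - D = (\<Phi> (x + h) - \<Phi> x - h * D) / h"
        using h by (simp add: field_simps)
      then have "norm ((\<Phi> (x + h) - \<Phi> x) / h - D) = \<bar>\<Phi> (x + h) - \<Phi> x - h * D\<bar> / \<bar>h\<bar>"
        by simp
      also have "\<dots> \<le> h\<^sup>2 * M / \<bar>h\<bar>" using key[OF h(1)] by (intro divide_right_mono) auto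
      also have "\<dots> = M * \<bar>h\<bar>" using h by (simp add: power2_eq_square field_simps abs_mult_self_eq)
      finally show ?thesis .
    qed
    show "eventually (\<lambda>h. norm ((\<Phi> (x + h) - \<Phi> x) / h - D) \<le> M * \<bar>h\<bar>) (at 0)"
      using ev by (rule eventually_mono) (use bd in auto)
  qed
  then have "((\<lambda>h. (\<Phi> (x + h) - \<Phi> x) / h) \<longlongrightarrow> D) (at 0)"
    by (rule LIM_zero_cancel)
  then show ?thesis unfolding DERIV_def \<Phi>_def D_def .
qed

lemma gamma_int:
  fixes \<beta> c :: real
  assumes b: "0 < \<beta>" and c: "0 < c"
  shows "has_bochner_integral lborel (\<lambda>w. indicator {0<..} w * w powr (\<beta> - 1) * exp (- (c * w)))
           (Gamma \<beta> * c powr (- \<beta>))"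
proof -
  define g where "g t = indicator {0..} t * (t powr (\<beta> - 1) / exp t)" for t :: real
  have hk: "((\<lambda>t. t powr (\<beta> - 1) / exp t) has_integral Gamma \<beta>) {0..}"
    by (rule Gamma_integral_real[OF b])
  have nn: "integral\<^sup>N lborel (\<lambda>t. ennreal (indicator {0..} t * (t powr (\<beta> - 1) / exp t))) = ennreal (Gamma \<beta>)"
    by (rule nn_integral_has_integral_lebesgue[OF _ hk]) auto
  have gm: "g \<in> borel_measurable lborel" unfolding g_def by measurable
  have hb: "has_bochner_integral lborel g (Gamma \<beta>)"
    by (rule has_bochner_integral_nn_integral[OF gm])
       (use nn b in \<open>auto simp: g_def Gamma_real_pos less_imp_le\<close>)
  then have gi: "integrable lborel g" and gv: "integral\<^sup>L lborel g = Gamma \<beta>"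
    by (auto simp: has_bochner_integral_iff)
  have gi': "integrable lborel (\<lambda>w. g (0 + c * w))"
    using lborel_integrable_real_affine[OF gi, of c 0] c by simp
  have gv': "integral\<^sup>L lborel g = c * (\<integral>w. g (0 + c * w) \<partial>lborel)"
    using lborel_integral_real_affine[of c g 0] c by simp
  have eqf: "indicator {0<..} w * w powr (\<beta> - 1) * exp (- (c * w)) = g (0 + c * w) / c powr (\<beta> - 1)" for w
  proof (cases "0 < w")
    case True
    then show ?thesis using c
      by (simp add: g_def indicator_def powr_mult exp_minus field_simps)
  next
    case False
    then show ?thesis using c by (cases "w = 0") (auto simp: g_def indicator_def zero_le_mult_iff)
  qed
  have "integrable lborel (\<lambda>w. g (0 + c * w) / c powr (\<beta> - 1))"
    using gi' by simp
  moreover have "(\<integral>w. g (0 + c * w) / c powr (\<beta> - 1) \<partial>lborel) = Gamma \<beta> * c powr (- \<beta>)"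
  proof -
    have "(\<integral>w. g (0 + c * w) / c powr (\<beta> - 1) \<partial>lborel) = (\<integral>w. g (0 + c * w) \<partial>lborel) / c powr (\<beta> - 1)"
      by simp
    also have "(\<integral>w. g (0 + c * w) \<partial>lborel) = Gamma \<beta> / c" using gv gv' c by (simp add: field_simps)
    finally show ?thesis using c by (simp add: powr_diff powr_minus field_simps)
  qed
  ultimately show ?thesis unfolding eqf by (simp add: has_bochner_integral_iff)
qed

lemma gamma_integrable:
  fixes \<gamma> y :: real
  assumes "-1 < \<gamma>" "0 < y"
  shows "integrable lborel (\<lambda>w. indicator {0<..} w * w powr \<gamma> * exp (- (y * w)))"
  using gamma_int[of "\<gamma> + 1" y] assms by (simp add: has_bochner_integral_iff)

lemma gamma_integral:
  fixes \<gamma> y :: real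
  assumes "-1 < \<gamma>" "0 < y"
  shows "(\<integral>w. indicator {0<..} w * w powr \<gamma> * exp (- (y * w)) \<partial>lborel) = Gamma (\<gamma> + 1) * y powr (- (\<gamma> + 1))"
  using gamma_int[of "\<gamma> + 1" y] assms by (simp add: has_bochner_integral_iff)

definition Lp :: "(real \<Rightarrow> real) \<Rightarrow> real \<Rightarrow> real" where
  "Lp K x = (\<integral>w. K w * exp (- (2 * x * w)) \<partial>lborel)"

definition kdom :: "(real \<Rightarrow> real) \<Rightarrow> real \<Rightarrow> real \<Rightarrow> bool" where
  "kdom K A \<gamma> \<longleftrightarrow> (\<forall>w. \<bar>K w\<bar> \<le> A * (indicator {0<..} w * w powr \<gamma>))"

lemma kdom_supp: "kdom K A \<gamma> \<Longrightarrow> K w \<noteq> 0 \<Longrightarrow> 0 < w"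
proof (rule ccontr)
  assume d: "kdom K A \<gamma>" and K: "K w \<noteq> 0" and w: "\<not> 0 < w"
  have "\<bar>K w\<bar> \<le> A * (indicator {0<..} w * w powr \<gamma>)" using d unfolding kdom_def by blast
  also have "\<dots> = 0" using w by simp
  finally show False using K by simp
qed

lemma kdom_pos: "kdom K A \<gamma> \<Longrightarrow> 0 < w \<Longrightarrow> \<bar>K w\<bar> \<le> A * w powr \<gamma>"
  unfolding kdom_def by (metis indicator_simps(1) greaterThan_iff mult_1)

lemma kdom_integrable:
  assumes Km: "K \<in> borel_measurable borel" and d: "kdom K A \<gamma>" and g: "-1 < \<gamma>" and y: "0 < y"
  shows "integrable lborel (\<lambda>w. w ^ n * K w * exp (- (y * w)))"
proof (rule Bochner_Integration.integrable_bound)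
  show "integrable lborel (\<lambda>w. A * (indicator {0<..} w * w powr (\<gamma> + real n) * exp (- (y * w))))"
    using gamma_integrable[of "\<gamma> + real n" y] g y by simp
  show "(\<lambda>w. w ^ n * K w * exp (- (y * w))) \<in> borel_measurable lborel" using Km by measurable
  show "AE w in lborel. norm (w ^ n * K w * exp (- (y * w)))
      \<le> norm (A * (indicator {0<..} w * w powr (\<gamma> + real n) * exp (- (y * w))))"
  proof (intro AE_I2)
    fix w :: real
    show "norm (w ^ n * K w * exp (- (y * w))) \<le> norm (A * (indicator {0<..} w * w powr (\<gamma> + real n) * exp (- (y * w))))"
    proof (cases "0 < w")
      case True
      have "norm (w ^ n * K w * exp (- (y * w))) = w ^ n * \<bar>K w\<bar> * exp (- (y * w))"
        using True by (simp add: abs_mult)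
      also have "\<dots> \<le> w ^ n * (A * w powr \<gamma>) * exp (- (y * w))"
        using kdom_pos[OF d True] True by (intro mult_right_mono mult_left_mono) auto
      also have "\<dots> = A * (w powr (\<gamma> + real n) * exp (- (y * w)))"
        using True by (simp add: powr_add powr_realpow)
      also have "\<dots> \<le> norm (A * (indicator {0<..} w * w powr (\<gamma> + real n) * exp (- (y * w))))"
        using True by simp
      finally show ?thesis .
    next
      case False
      then have "K w = 0" using kdom_supp[OF d] by blast
      then show ?thesis by simp
    qed
  qed
qed

lemma kdom_bound:
  assumes Km: "K \<in> borel_measurable borel" and d: "kdom K A \<gamma>" and g: "-1 < \<gamma>" and x: "0 < x"
  shows "\<bar>Lp K x\<bar> \<le> A * Gamma (\<gamma> + 1) * (2 * x) powr (- (\<gamma> + 1))"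
proof -
  have "\<bar>Lp K x\<bar> \<le> (\<integral>w. A * (indicator {0<..} w * w powr \<gamma> * exp (- ((2 * x) * w))) \<partial>lborel)"
    unfolding Lp_def
  proof (rule integral_abs_bound_integral)
    show "integrable lborel (\<lambda>w. K w * exp (- (2 * x * w)))"
      using kdom_integrable[OF Km d g, of "2 * x" 0] x by simp
    show "integrable lborel (\<lambda>w. A * (indicator {0<..} w * w powr \<gamma> * exp (- (2 * x * w))))"
      using gamma_integrable[of \<gamma> "2 * x"] g x by simp
    fix w :: real
    show "\<bar>K w * exp (- (2 * x * w))\<bar> \<le> A * (indicator {0<..} w * w powr \<gamma> * exp (- (2 * x * w)))"
      using d unfolding kdom_def by (simp add: abs_mult mult_right_mono mult.assoc[symmetric])
  qed
  also have "\<dots> = A * Gamma (\<gamma> + 1) * (2 * x) powr (- (\<gamma> + 1))"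
    using gamma_integral[of \<gamma> "2 * x"] g x by simp
  finally show ?thesis .
qed

definition lapfam :: "(real \<Rightarrow> real) \<Rightarrow> nat \<Rightarrow> real \<Rightarrow> real" where
  "lapfam K k = Lp (\<lambda>w. (- 2 * w) ^ k * K w)"

lemma kdom_pow:
  assumes "kdom K A \<gamma>"
  shows "kdom (\<lambda>w. (- 2 * w) ^ k * K w) (2 ^ k * A) (\<gamma> + real k)"
  unfolding kdom_def
proof
  fix w :: real
  show "\<bar>(- 2 * w) ^ k * K w\<bar> \<le> 2 ^ k * A * (indicator {0<..} w * w powr (\<gamma> + real k))"
  proof (cases "0 < w")
    case True
    have "\<bar>(- 2 * w) ^ k * K w\<bar> = 2 ^ k * w ^ k * \<bar>K w\<bar>"
      using True by (simp add: abs_mult power_abs power_mult_distrib)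
    also have "\<dots> \<le> 2 ^ k * w ^ k * (A * w powr \<gamma>)"
      using kdom_pos[OF assms True] True by (intro mult_left_mono) auto
    also have "\<dots> = 2 ^ k * A * (indicator {0<..} w * w powr (\<gamma> + real k))"
      using True by (simp add: powr_add powr_realpow)
    finally show ?thesis .
  next
    case False
    then have "K w = 0" using kdom_supp[OF assms] by blast
    then show ?thesis using False by simp
  qed
qed

lemma lapfam_deriv:
  assumes Km: "K \<in> borel_measurable borel" and d: "kdom K A \<gamma>" and g: "-1 < \<gamma>" and x: "0 < x"
  shows "(lapfam K k has_real_derivative lapfam K (Suc k) x) (at x)"
proof -
  let ?K = "\<lambda>w. (- 2 * w) ^ k * K w"
  have Km': "?K \<in> borel_measurable borel" using Km by measurable
  have d': "kdom ?K (2 ^ k * A) (\<gamma> + real k)" by (rule kdom_pow[OF d])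
  have g': "-1 < \<gamma> + real k" using g by simp
  have "((\<lambda>x. \<integral>w. ?K w * (exp (- (2 * x * w)) - 0) \<partial>lborel) has_real_derivative
           (\<integral>w. - 2 * w * ?K w * exp (- (2 * x * w)) \<partial>lborel)) (at x)"
  proof (rule lap_deriv_gen[OF _ _ _ _ x])
    show "?K w \<noteq> 0 \<Longrightarrow> 0 < w" for w using kdom_supp[OF d'] by blast
    show "integrable lborel (\<lambda>w. w * ?K w * exp (- (y * w)))" if "0 < y" for y
      using kdom_integrable[OF Km' d' g' that, of 1] by simp
    show "integrable lborel (\<lambda>w. w\<^sup>2 * ?K w * exp (- (y * w)))" if "0 < y" for y
      using kdom_integrable[OF Km' d' g' that, of 2] by simp
    show "integrable lborel (\<lambda>w. ?K w * (exp (- (2 * y * w)) - 0))" if "0 < y" for y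
      using kdom_integrable[OF Km' d' g', of "2 * y" 0] that by simp
  qed
  moreover have "(\<lambda>x. \<integral>w. ?K w * (exp (- (2 * x * w)) - 0) \<partial>lborel) = Lp ?K"
    by (simp add: Lp_def fun_eq_iff)
  moreover have "(\<integral>w. - 2 * w * ?K w * exp (- (2 * x * w)) \<partial>lborel) = Lp (\<lambda>w. (- 2 * w) ^ Suc k * K w) x"
    unfolding Lp_def by (intro Bochner_Integration.integral_cong) (auto simp: mult_ac)
  ultimately show ?thesis unfolding lapfam_def by simp
qed

definition fam :: "real \<Rightarrow> (nat \<Rightarrow> real \<Rightarrow> real) \<Rightarrow> bool" where
  "fam m H \<longleftrightarrow> (\<forall>j x. 1/2 < x \<longrightarrow> (H j has_real_derivative H (Suc j) x) (at x)) \<and>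
     (\<forall>j. \<exists>C. \<forall>x\<ge>1. \<bar>H j x\<bar> \<le> C * x powr (m - real j))"

lemma fam_lap:
  assumes Km: "K \<in> borel_measurable borel" and d: "kdom K A \<gamma>" and g: "-1 < \<gamma>"
  shows "fam (- (\<gamma> + 1)) (lapfam K)"
  unfolding fam_def
proof (intro conjI allI impI)
  fix j :: nat and x :: real assume "1/2 < x"
  then show "(lapfam K j has_real_derivative lapfam K (Suc j) x) (at x)"
    by (intro lapfam_deriv[OF Km d g]) auto
next
  fix j :: nat
  have Km': "(\<lambda>w. (- 2 * w) ^ j * K w) \<in> borel_measurable borel" using Km by measurable
  show "\<exists>C. \<forall>x\<ge>1. \<bar>lapfam K j x\<bar> \<le> C * x powr (- (\<gamma> + 1) - real j)"
  proof (intro exI[of _ "2 ^ j * A * Gamma (\<gamma> + real j + 1) * 2 powr (- (\<gamma> + real j + 1))"] allI impI)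
    fix x :: real assume x: "1 \<le> x"
    have "\<bar>lapfam K j x\<bar> \<le> 2 ^ j * A * Gamma (\<gamma> + real j + 1) * (2 * x) powr (- (\<gamma> + real j + 1))"
      unfolding lapfam_def using kdom_bound[OF Km' kdom_pow[OF d] _, of x] g x by simp
    also have "\<dots> = 2 ^ j * A * Gamma (\<gamma> + real j + 1) * 2 powr (- (\<gamma> + real j + 1)) * x powr (- (\<gamma> + 1) - real j)"
      using x by (simp add: powr_mult algebra_simps)
    finally show "\<bar>lapfam K j x\<bar> \<le> 2 ^ j * A * Gamma (\<gamma> + real j + 1) * 2 powr (- (\<gamma> + real j + 1)) * x powr (- (\<gamma> + 1) - real j)" .
  qed
qed

lemma fam_mono:
  assumes "fam m H" "m \<le> m'"
  shows "fam m' H"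
  unfolding fam_def
proof (intro conjI allI impI)
  show "1/2 < x \<Longrightarrow> (H j has_real_derivative H (Suc j) x) (at x)" for j x
    using assms(1) unfolding fam_def by blast
  fix j
  obtain C where C: "\<forall>x\<ge>1. \<bar>H j x\<bar> \<le> C * x powr (m - real j)" using assms(1) unfolding fam_def by blast
  show "\<exists>C. \<forall>x\<ge>1. \<bar>H j x\<bar> \<le> C * x powr (m' - real j)"
  proof (intro exI[of _ "\<bar>C\<bar>"] allI impI)
    fix x :: real assume x: "1 \<le> x"
    have "\<bar>H j x\<bar> \<le> C * x powr (m - real j)" using C x by blast
    also have "\<dots> \<le> \<bar>C\<bar> * x powr (m - real j)" by (intro mult_right_mono) auto
    also have "\<dots> \<le> \<bar>C\<bar> * x powr (m' - real j)" using x assms(2) by (intro mult_left_mono powr_mono) auto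
    finally show "\<bar>H j x\<bar> \<le> \<bar>C\<bar> * x powr (m' - real j)" .
  qed
qed

lemma fam_add:
  assumes "fam m H" "fam m G"
  shows "fam m (\<lambda>j x. H j x + G j x)"
  unfolding fam_def
proof (intro conjI allI impI)
  show "1/2 < x \<Longrightarrow> ((\<lambda>x. H j x + G j x) has_real_derivative H (Suc j) x + G (Suc j) x) (at x)" for j x
    using assms unfolding fam_def by (auto intro: DERIV_add)
  fix j
  obtain C where C: "\<forall>x\<ge>1. \<bar>H j x\<bar> \<le> C * x powr (m - real j)" using assms(1) unfolding fam_def by blast
  obtain D where D: "\<forall>x\<ge>1. \<bar>G j x\<bar> \<le> D * x powr (m - real j)" using assms(2) unfolding fam_def by blast
  show "\<exists>C. \<forall>x\<ge>1. \<bar>H j x + G j x\<bar> \<le> C * x powr (m - real j)"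
  proof (intro exI[of _ "C + D"] allI impI)
    fix x :: real assume "1 \<le> x"
    then show "\<bar>H j x + G j x\<bar> \<le> (C + D) * x powr (m - real j)"
      using C D by (smt (verit, best) distrib_right)
  qed
qed

lemma fam_scale:
  assumes "fam m H"
  shows "fam m (\<lambda>j x. c * H j x)"
  unfolding fam_def
proof (intro conjI allI impI)
  show "1/2 < x \<Longrightarrow> ((\<lambda>x. c * H j x) has_real_derivative c * H (Suc j) x) (at x)" for j x
    using assms unfolding fam_def by (auto intro: DERIV_cmult)
  fix j
  obtain C where C: "\<forall>x\<ge>1. \<bar>H j x\<bar> \<le> C * x powr (m - real j)" using assms(1) unfolding fam_def by blast
  show "\<exists>C. \<forall>x\<ge>1. \<bar>c * H j x\<bar> \<le> C * x powr (m - real j)"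
  proof (intro exI[of _ "\<bar>c\<bar> * C"] allI impI)
    fix x :: real assume "1 \<le> x"
    then have "\<bar>H j x\<bar> \<le> C * x powr (m - real j)" using C by blast
    then show "\<bar>c * H j x\<bar> \<le> \<bar>c\<bar> * C * x powr (m - real j)"
      by (simp add: abs_mult mult.assoc mult_left_mono)
  qed
qed

lemma fam_sum:
  assumes "\<And>i. i \<in> I \<Longrightarrow> fam m (H i)" "finite I"
  shows "fam m (\<lambda>j x. \<Sum>i\<in>I. H i j x)"
  using assms(2,1)
proof (induction I rule: finite_induct)
  case empty
  show ?case unfolding fam_def by (auto intro!: exI[of _ 0])
next
  case (insert i I)
  then show ?case by (simp add: fam_add)
qed

lemma Suc_choose': "Suc n choose k = (n choose k) + (if k = 0 then 0 else (n choose (k-1)))"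
  by (cases k) simp_all

lemma leibniz_family:
  fixes f g :: "nat \<Rightarrow> real \<Rightarrow> real"
  assumes f: "\<And>m. (f m has_real_derivative f (Suc m) t) (at t)"
      and g: "\<And>m. (g m has_real_derivative g (Suc m) t) (at t)"
  shows "((\<lambda>t. \<Sum>i\<le>n. real (n choose i) * f i t * g (n - i) t) has_real_derivative
           (\<Sum>i\<le>Suc n. real (Suc n choose i) * f i t * g (Suc n - i) t)) (at t)"
proof -
  have "((\<lambda>t. \<Sum>i\<le>n. real (n choose i) * f i t * g (n - i) t) has_real_derivative
           (\<Sum>i\<le>n. real (n choose i) * (f (Suc i) t * g (n - i) t + f i t * g (Suc (n - i)) t))) (at t)"
    by (intro DERIV_sum) (auto intro!: derivative_eq_intros f g simp: algebra_simps)
  also have "(\<Sum>i\<le>n. real (n choose i) * (f (Suc i) t * g (n - i) t + f i t * g (Suc (n - i)) t))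
     = (\<Sum>i\<le>Suc n. real (Suc n choose i) * f i t * g (Suc n - i) t)"
  proof -
    have A: "(\<Sum>i\<le>Suc n. real (if i = 0 then 0 else n choose (i - 1)) * f i t * g (Suc n - i) t)
        = (\<Sum>i\<le>n. real (n choose i) * f (Suc i) t * g (n - i) t)"
      by (subst sum.atMost_Suc_shift) simp
    have B: "(\<Sum>i\<le>Suc n. real (n choose i) * f i t * g (Suc n - i) t)
        = (\<Sum>i\<le>n. real (n choose i) * f i t * g (Suc (n - i)) t)"
      by (simp add: Suc_diff_le)
    have "(\<Sum>i\<le>Suc n. real (Suc n choose i) * f i t * g (Suc n - i) t)
        = (\<Sum>i\<le>Suc n. real (n choose i) * f i t * g (Suc n - i) t)
          + (\<Sum>i\<le>Suc n. real (if i = 0 then 0 else n choose (i - 1)) * f i t * g (Suc n - i) t)"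
      by (subst sum.distrib[symmetric]) (intro sum.cong refl, simp add: Suc_choose' algebra_simps)
    then show ?thesis unfolding A B by (simp add: sum.distrib algebra_simps)
  qed
  finally show ?thesis .
qed

definition pfam :: "real \<Rightarrow> nat \<Rightarrow> real \<Rightarrow> real" where
  "pfam q m w = (\<Prod>i<m. (q - real i)) * (1 + w) powr (q - real m)"

lemma pfam_deriv:
  assumes "-1 < w"
  shows "(pfam q m has_real_derivative pfam q (Suc m) w) (at w)"
proof -
  have "((\<lambda>w. (\<Prod>i<m. (q - real i)) * (1 + w) powr (q - real m)) has_real_derivative
      (\<Prod>i<m. (q - real i)) * ((q - real m) * (1 + w) powr (q - real m - 1))) (at w)"
    using assms by (auto intro!: derivative_eq_intros)
  moreover have "(\<Prod>i<m. (q - real i)) * ((q - real m) * (1 + w) powr (q - real m - 1)) = pfam q (Suc m) w"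
    by (simp add: pfam_def algebra_simps)
  ultimately show ?thesis unfolding pfam_def[abs_def] by simp
qed

definition efam :: "nat \<Rightarrow> real \<Rightarrow> real" where
  "efam m w = 2 ^ m * exp (2 * w)"

lemma efam_deriv: "(efam m has_real_derivative efam (Suc m) w) (at w)"
  unfolding efam_def[abs_def] by (auto intro!: derivative_eq_intros)

definition Dg :: "real \<Rightarrow> nat \<Rightarrow> real \<Rightarrow> real" where
  "Dg q n w = (\<Sum>i\<le>n. real (n choose i) * pfam q i w * efam (n - i) w)"

lemma Dg_deriv: "-1 < w \<Longrightarrow> (Dg q n has_real_derivative Dg q (Suc n) w) (at w)"
  unfolding Dg_def[abs_def] by (rule leibniz_family[where f="pfam q" and g=efam, OF pfam_deriv efam_deriv])

definition gfun :: "real \<Rightarrow> real \<Rightarrow> real" where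
  "gfun q w = (1 + w) powr q * exp (2 * w)"

lemma Dg_0: "Dg q 0 = gfun q"
  by (simp add: fun_eq_iff Dg_def gfun_def pfam_def efam_def)

definition gc :: "real \<Rightarrow> nat \<Rightarrow> real" where
  "gc q i = Dg q i 0 / fact i"

lemma gc_0: "gc q 0 = 1"
  by (simp add: gc_def Dg_0 gfun_def)

lemma taylor_g:
  assumes b: "0 < b"
  shows "\<exists>B. \<forall>w. 0 < w \<and> w < b \<longrightarrow> \<bar>(gfun q w - (\<Sum>i\<le>N. gc q i * w ^ i)) / w ^ Suc N\<bar> \<le> B"
proof -
  have "continuous_on {0..b} (Dg q (Suc N))"
    by (intro continuous_at_imp_continuous_on ballI DERIV_isCont[OF Dg_deriv]) auto
  then have "bounded (Dg q (Suc N) ` {0..b})"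
    by (intro compact_imp_bounded compact_continuous_image) auto
  then obtain B where B: "\<And>t. t \<in> {0..b} \<Longrightarrow> \<bar>Dg q (Suc N) t\<bar> \<le> B"
    unfolding bounded_real by (metis image_eqI)
  show ?thesis
  proof (intro exI[of _ B] allI impI)
    fix w assume w: "0 < w \<and> w < b"
    obtain t where t: "0 < t" "t < w"
      "gfun q w = (\<Sum>m<Suc N. Dg q m 0 / fact m * w ^ m) + Dg q (Suc N) t / fact (Suc N) * w ^ Suc N"
      using Maclaurin[of w "Suc N" "Dg q" "gfun q"] w Dg_0 Dg_deriv by auto
    have "(\<Sum>m<Suc N. Dg q m 0 / fact m * w ^ m) = (\<Sum>i\<le>N. gc q i * w ^ i)"
      unfolding gc_def lessThan_Suc_atMost by simp
    then have "(gfun q w - (\<Sum>i\<le>N. gc q i * w ^ i)) / w ^ Suc N = Dg q (Suc N) t / fact (Suc N)"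
      using t w by simp
    moreover have "\<bar>Dg q (Suc N) t / fact (Suc N)\<bar> \<le> B"
    proof -
      have "\<bar>Dg q (Suc N) t\<bar> \<le> B" using B t w by auto
      moreover have "(1::real) \<le> fact (Suc N)" by (rule fact_ge_1)
      have "\<bar>Dg q (Suc N) t / fact (Suc N)\<bar> = \<bar>Dg q (Suc N) t\<bar> / fact (Suc N)"
        by (simp add: abs_divide)
      also have "\<dots> \<le> \<bar>Dg q (Suc N) t\<bar> / 1"
        by (rule divide_left_mono) (use \<open>(1::real) \<le> fact (Suc N)\<close> in auto)
      finally show ?thesis using \<open>\<bar>Dg q (Suc N) t\<bar> \<le> B\<close> by simp
    qed
    ultimately show "\<bar>(gfun q w - (\<Sum>i\<le>N. gc q i * w ^ i)) / w ^ Suc N\<bar> \<le> B" by simp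
  qed
qed

lemma tail_int:
  fixes b s :: real
  assumes b: "0 < b" and s: "0 < s"
  shows "integrable lborel (\<lambda>w. indicator {b<..} w * w powr (-1 - s))"
    and "(\<integral>w. indicator {b<..} w * w powr (-1 - s) \<partial>lborel) = b powr (- s) / s"
proof -
  let ?F = "\<lambda>w. - (w powr (- s)) / s"
  have d: "(?F has_real_derivative w powr (-1 - s)) (at w)" if "ereal b < ereal w" for w
  proof -
    have w: "0 < w" using that b by simp
    have "(?F has_real_derivative - ((- s) * w powr (- s - 1)) / s) (at w)"
      using w by (auto intro!: derivative_eq_intros)
    moreover have "- ((- s) * w powr (- s - 1)) / s = w powr (-1 - s)"
    proof -
      have e: "- s - 1 = -1 - s" by simp
      show ?thesis using s unfolding e by simp
    qed
    ultimately show ?thesis by simp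
  qed
  have c: "isCont (\<lambda>w. w powr (-1 - s)) w" if "ereal b < ereal w" for w
    using that b by (auto intro!: continuous_intros)
  have A: "((?F \<circ> real_of_ereal) \<longlongrightarrow> ?F b) (at_right (ereal b))"
    unfolding ereal_tendsto_simps using b s by (intro tendsto_intros) auto
  have B: "((?F \<circ> real_of_ereal) \<longlongrightarrow> 0) (at_left \<infinity>)"
  proof -
    have "((\<lambda>w. w powr (- s)) \<longlongrightarrow> 0) at_top"
      using s by (intro tendsto_neg_powr filterlim_ident) auto
    then have "(?F \<longlongrightarrow> - 0 / s) at_top" using s by (intro tendsto_intros) auto
    then show ?thesis unfolding ereal_tendsto_simps by simp
  qed
  have r: "set_integrable lborel (einterval (ereal b) \<infinity>) (\<lambda>w. w powr (-1 - s))"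
    "(LBINT w=ereal b..\<infinity>. w powr (-1 - s)) = 0 - ?F b"
    using interval_integral_FTC_nonneg[of "ereal b" \<infinity> ?F "\<lambda>w. w powr (-1 - s)" "?F b" 0] d c A B
    by auto
  show "integrable lborel (\<lambda>w. indicator {b<..} w * w powr (-1 - s))"
    using r(1) by (simp add: set_integrable_def)
  show "(\<integral>w. indicator {b<..} w * w powr (-1 - s) \<partial>lborel) = b powr (- s) / s"
    using r(2) by (simp add: interval_lebesgue_integral_def set_lebesgue_integral_def)
qed

lemma A1_int:
  fixes b s :: real
  assumes b: "0 < b" and s: "0 < s" "s < 1"
  shows "integrable lborel (\<lambda>w. indicator {0<..<b} w * (w powr (-1 - s) * (1 - (1 + w) powr (s - 1))))"
    and "(\<integral>w. indicator {0<..<b} w * (w powr (-1 - s) * (1 - (1 + w) powr (s - 1))) \<partial>lborel)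
           = ((1 + b) powr s - 1) * b powr (- s) / s"
proof -
  let ?f = "\<lambda>w. w powr (-1 - s) * (1 - (1 + w) powr (s - 1))"
  let ?F = "\<lambda>w. ((1 + w) powr s - 1) * w powr (- s) / s"
  have d: "(?F has_real_derivative ?f w) (at w)" if "0 < w" for w
  proof -
    have "(?F has_real_derivative ((s * (1 + w) powr (s - 1)) * w powr (- s)
             + ((1 + w) powr s - 1) * ((- s) * w powr (- s - 1))) / s) (at w)"
      using that s by (auto intro!: derivative_eq_intros)
    moreover have "((s * (1 + w) powr (s - 1)) * w powr (- s)
             + ((1 + w) powr s - 1) * ((- s) * w powr (- s - 1))) / s = ?f w"
    proof -
      have e1: "(1 + w) powr s = (1 + w) powr (s - 1) * (1 + w)"
      proof -
        have "(1 + w) powr s = (1 + w) powr ((s - 1) + 1)" by simp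
        also have "\<dots> = (1 + w) powr (s - 1) * (1 + w) powr 1" by (rule powr_add)
        finally show ?thesis using that by simp
      qed
      have e2: "w powr (- s) = w powr (- s - 1) * w"
      proof -
        have "w powr (- s) = w powr ((- s - 1) + 1)" by simp
        also have "\<dots> = w powr (- s - 1) * w powr 1" by (rule powr_add)
        finally show ?thesis using that by simp
      qed
      have e3: "- s - 1 = -1 - s" by simp
      show ?thesis using s unfolding e1 e2 e3 by (simp add: field_simps)
    qed
    ultimately show ?thesis by simp
  qed
  have nn: "0 \<le> ?f w" if "0 < w" for w
  proof -
    have "(1 + w) powr (s - 1) \<le> (1 + w) powr 0" using that s by (intro powr_mono) auto
    then have "(1 + w) powr (s - 1) \<le> 1" using that by simp
    then show ?thesis by simp
  qed
  have A: "((?F \<circ> real_of_ereal) \<longlongrightarrow> 0) (at_right (ereal 0))"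
    unfolding ereal_tendsto_simps
  proof (rule tendsto_sandwich[where f="\<lambda>_. 0" and h="\<lambda>w. w powr (1 - s) / s"])
    have ev: "eventually (\<lambda>w::real. 0 < w) (at_right 0)" by (simp add: eventually_at_right_less)
    show "eventually (\<lambda>w. 0 \<le> ?F w) (at_right 0)"
      using ev
    proof eventually_elim
      case (elim w)
      have "1 \<le> (1 + w) powr s" using elim s by (intro ge_one_powr_ge_zero) auto
      then show ?case using s by (intro divide_nonneg_pos mult_nonneg_nonneg) auto
    qed
    show "eventually (\<lambda>w. ?F w \<le> w powr (1 - s) / s) (at_right 0)"
      using ev
    proof eventually_elim
      case (elim w)
      have "(1 + w) powr s \<le> (1 + w) powr 1" using elim s by (intro powr_mono) auto
      then have "(1 + w) powr s - 1 \<le> w" using elim by simp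
      then have "((1 + w) powr s - 1) * w powr (- s) \<le> w * w powr (- s)" by (intro mult_right_mono) auto
      also have "w * w powr (- s) = w powr (1 - s)" using elim by (simp add: powr_minus powr_diff divide_inverse)
      finally show ?case using s by (intro divide_right_mono) auto
    qed
    show "((\<lambda>_. 0::real) \<longlongrightarrow> 0) (at_right 0)" by simp
    have "((\<lambda>w. w powr (1 - s)) \<longlongrightarrow> 0) (at_right 0)"
      by (rule tendsto_zero_powrI[where b="1 - s"]) (use s in \<open>auto intro!: tendsto_ident_at eventually_at_rightI[of 0 1]\<close>)
    then show "((\<lambda>w. w powr (1 - s) / s) \<longlongrightarrow> 0) (at_right 0)" by (auto intro: tendsto_divide_zero)
  qed
  have B: "((?F \<circ> real_of_ereal) \<longlongrightarrow> ?F b) (at_left (ereal b))"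
    unfolding ereal_tendsto_simps using b s by (intro tendsto_intros) auto
  have c: "isCont ?f w" if "0 < w" for w
    using that by (auto intro!: continuous_intros)
  have r: "set_integrable lborel (einterval (ereal 0) (ereal b)) ?f"
    "(LBINT w=ereal 0..ereal b. ?f w) = ?F b - 0"
    using interval_integral_FTC_nonneg[of "ereal 0" "ereal b" ?F ?f 0 "?F b"] d c A B nn b
    by auto
  show "integrable lborel (\<lambda>w. indicator {0<..<b} w * ?f w)"
    using r(1) by (simp add: set_integrable_def)
  show "(\<integral>w. indicator {0<..<b} w * ?f w \<partial>lborel) = ((1 + b) powr s - 1) * b powr (- s) / s"
    using r(2) b by (simp add: interval_lebesgue_integral_def set_lebesgue_integral_def)
qed

lemma mult_powr_eq: "0 < w \<Longrightarrow> w * w powr a = w powr (a + 1)" for w a :: real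
proof -
  assume w: "0 < w"
  have "w powr (a + 1) = w powr a * w powr 1" by (rule powr_add)
  also have "w powr 1 = w" using w by simp
  finally show ?thesis by simp
qed

definition Kj :: "real \<Rightarrow> real \<Rightarrow> real" where
  "Kj s w = indicator {0<..} w * w powr (-1 - s)"

lemma Kj_IE:
  assumes s: "0 < s" "s < 1" and y: "0 < y"
  shows "integrable lborel (\<lambda>w. Kj s w * (exp (- (2 * y * w)) - 1))"
proof (rule Bochner_Integration.integrable_bound)
  let ?G = "\<lambda>w. 2 * y * exp 1 * (indicator {0<..} w * w powr (- s) * exp (- (1 * w)))
      + indicator {1<..} w * w powr (-1 - s)"
  show "integrable lborel ?G"
    using gamma_integrable[of "- s" 1] tail_int(1)[of 1 s] s by auto
  show "(\<lambda>w. Kj s w * (exp (- (2 * y * w)) - 1)) \<in> borel_measurable lborel"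
    unfolding Kj_def by measurable
  show "AE w in lborel. norm (Kj s w * (exp (- (2 * y * w)) - 1)) \<le> norm (?G w)"
  proof (intro AE_I2)
    fix w :: real
    have G0: "0 \<le> ?G w" using y by (auto intro!: add_nonneg_nonneg mult_nonneg_nonneg simp: indicator_def)
    show "norm (Kj s w * (exp (- (2 * y * w)) - 1)) \<le> norm (?G w)"
    proof (cases "0 < w")
      case False
      then show ?thesis using G0 by (simp add: Kj_def)
    next
      case True
      have e1: "\<bar>exp (- (2 * y * w)) - 1\<bar> \<le> 1" using True y by auto
      have e2: "\<bar>exp (- (2 * y * w)) - 1\<bar> \<le> 2 * y * w"
      proof -
        have "1 + (- (2 * y * w)) \<le> exp (- (2 * y * w))" by (rule exp_ge_add_one_self)
        moreover have "exp (- (2 * y * w)) \<le> 1" using True y by simp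
        ultimately show ?thesis by simp
      qed
      have "norm (Kj s w * (exp (- (2 * y * w)) - 1)) = w powr (-1 - s) * \<bar>exp (- (2 * y * w)) - 1\<bar>"
        using True by (simp add: Kj_def abs_mult)
      also have "\<dots> \<le> ?G w"
      proof (cases "w \<le> 1")
        case True2: True
        have "w powr (-1 - s) * \<bar>exp (- (2 * y * w)) - 1\<bar> \<le> w powr (-1 - s) * (2 * y * w)"
          by (intro mult_left_mono e2) auto
        also have "\<dots> = 2 * y * w powr (- s)"
        proof -
          have "w * w powr (-1 - s) = w powr (- s)" using mult_powr_eq[OF True, of "-1 - s"] by simp
          then show ?thesis by (simp add: mult_ac)
        qed
        also have "\<dots> \<le> 2 * y * exp 1 * (w powr (- s) * exp (- (1 * w)))"
        proof -
          have "1 \<le> exp 1 * exp (- w)" using True2 by (simp add: exp_add[symmetric])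
          then have "w powr (- s) \<le> w powr (- s) * (exp 1 * exp (- w))"
            by (metis mult.right_neutral mult_left_mono powr_ge_zero)
          then show ?thesis using y by (simp add: mult_ac)
        qed
        also have "\<dots> \<le> ?G w" using True True2 by (simp add: indicator_def)
        finally show ?thesis .
      next
        case False
        have "w powr (-1 - s) * \<bar>exp (- (2 * y * w)) - 1\<bar> \<le> w powr (-1 - s) * 1"
          by (intro mult_left_mono e1) auto
        also have "\<dots> \<le> ?G w" using False True y by (simp add: indicator_def)
        finally show ?thesis .
      qed
      also have "\<dots> \<le> norm (?G w)" by simp
      finally show ?thesis .
    qed
  qed
qed

lemma Kj_w:
  assumes "0 < w"
  shows "w * Kj s w = indicator {0<..} w * w powr (- s)"
    and "w\<^sup>2 * Kj s w = indicator {0<..} w * w powr (1 - s)"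
proof -
  have "w * w powr (-1 - s) = w powr (- s)" using mult_powr_eq[OF assms, of "-1 - s"] by simp
  then show "w * Kj s w = indicator {0<..} w * w powr (- s)" using assms by (simp add: Kj_def)
  have "w\<^sup>2 * w powr (-1 - s) = w * (w * w powr (-1 - s))" by (simp add: power2_eq_square)
  also have "\<dots> = w powr (1 - s)" using mult_powr_eq[OF assms, of "-1 - s"] mult_powr_eq[OF assms, of "- s"] by simp
  finally show "w\<^sup>2 * Kj s w = indicator {0<..} w * w powr (1 - s)" using assms by (simp add: Kj_def)
qed

lemma J_val:
  assumes s: "0 < s" "s < 1" and x: "0 < x"
  shows "(\<integral>w. Kj s w * (exp (- (2 * x * w)) - 1) \<partial>lborel) = - (2 powr s * Gamma (1 - s) / s) * x powr s"
proof -
  define \<Phi> where "\<Phi> x = (\<integral>w. Kj s w * (exp (- (2 * x * w)) - 1) \<partial>lborel)" for x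
  define Jc where "Jc = 2 powr s * Gamma (1 - s) / s"
  have supp: "Kj s w \<noteq> 0 \<Longrightarrow> 0 < w" for w by (simp add: Kj_def indicator_def split: if_splits)
  have I1: "integrable lborel (\<lambda>w. w * Kj s w * exp (- (y * w)))" if y: "0 < y" for y
  proof -
    have "integrable lborel (\<lambda>w. indicator {0<..} w * w powr (- s) * exp (- (y * w)))"
      using gamma_integrable[of "- s" y] s y by simp
    then show ?thesis
    proof (rule Bochner_Integration.integrable_cong[THEN iffD1, rotated 2])
      fix w :: real
      show "indicator {0<..} w * w powr (- s) * exp (- (y * w)) = w * Kj s w * exp (- (y * w))"
        by (cases "0 < w") (simp_all add: Kj_w(1), simp add: Kj_def)
    qed simp
  qed
  have I2: "integrable lborel (\<lambda>w. w\<^sup>2 * Kj s w * exp (- (y * w)))" if y: "0 < y" for y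
  proof -
    have "integrable lborel (\<lambda>w. indicator {0<..} w * w powr (1 - s) * exp (- (y * w)))"
      using gamma_integrable[of "1 - s" y] s y by simp
    then show ?thesis
    proof (rule Bochner_Integration.integrable_cong[THEN iffD1, rotated 2])
      fix w :: real
      show "indicator {0<..} w * w powr (1 - s) * exp (- (y * w)) = w\<^sup>2 * Kj s w * exp (- (y * w))"
        by (cases "0 < w") (simp_all add: Kj_w(2), simp add: Kj_def)
    qed simp
  qed
  have dval: "(\<integral>w. - 2 * w * Kj s w * exp (- (2 * y * w)) \<partial>lborel) = - 2 * (Gamma (1 - s) * (2 * y) powr (s - 1))"
    if y: "0 < y" for y
  proof -
    have "(\<integral>w. - 2 * w * Kj s w * exp (- (2 * y * w)) \<partial>lborel)
        = (\<integral>w. - 2 * (indicator {0<..} w * w powr (- s) * exp (- ((2 * y) * w))) \<partial>lborel)"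
    proof (intro Bochner_Integration.integral_cong refl)
      fix w :: real
      show "- 2 * w * Kj s w * exp (- (2 * y * w)) = - 2 * (indicator {0<..} w * w powr (- s) * exp (- ((2 * y) * w)))"
      proof (cases "0 < w")
        case True
        have "- 2 * w * Kj s w * exp (- (2 * y * w)) = - 2 * ((w * Kj s w) * exp (- (2 * y * w)))"
          by (simp add: mult_ac)
        then show ?thesis unfolding Kj_w(1)[OF True] by simp
      qed (simp add: Kj_def)
    qed
    also have "\<dots> = - 2 * (Gamma (1 - s) * (2 * y) powr (s - 1))"
      using gamma_integral[of "- s" "2 * y"] s y by simp
    finally show ?thesis .
  qed
  have deriv: "(\<Phi> has_real_derivative - 2 * (Gamma (1 - s) * (2 * y) powr (s - 1))) (at y)" if y: "0 < y" for y
    unfolding \<Phi>_def dval[OF y, symmetric]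
    by (rule lap_deriv_gen[OF supp I1 I2 Kj_IE[OF s] y])
  define \<Psi> where "\<Psi> x = \<Phi> x + Jc * x powr s" for x
  have dz: "(\<Psi> has_real_derivative 0) (at y within {0<..})" if y: "y \<in> {0<..}" for y
  proof -
    have y0: "0 < y" using y by simp
    have "(\<Psi> has_real_derivative - 2 * (Gamma (1 - s) * (2 * y) powr (s - 1)) + Jc * (s * y powr (s - 1))) (at y)"
      unfolding \<Psi>_def[abs_def] using y0
      by (auto intro!: derivative_eq_intros deriv)
    moreover have "- 2 * (Gamma (1 - s) * (2 * y) powr (s - 1)) + Jc * (s * y powr (s - 1)) = 0"
    proof -
      have "(2 * y) powr (s - 1) = 2 powr (s - 1) * y powr (s - 1)" using y0 by (simp add: powr_mult)
      moreover have "2 * 2 powr (s - 1) = (2::real) powr s"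
        by (simp add: powr_diff)
      ultimately show ?thesis using s unfolding Jc_def by (simp add: field_simps)
    qed
    ultimately show ?thesis by (simp add: has_field_derivative_at_within)
  qed
  obtain \<kappa> where \<kappa>: "\<And>y. y \<in> {0<..} \<Longrightarrow> \<Psi> y = \<kappa>"
    using has_field_derivative_zero_constant[of "{0<..}" \<Psi>] dz by auto
  have scale: "\<Phi> y = y powr s * \<Phi> 1" if y: "0 < y" for y
  proof -
    have "\<Phi> y = \<bar>1 / y\<bar> *\<^sub>R (\<integral>v. Kj s (0 + (1 / y) * v) * (exp (- (2 * y * (0 + (1 / y) * v))) - 1) \<partial>lborel)"
      unfolding \<Phi>_def using y by (intro lborel_integral_real_affine) simp
    also have "(\<integral>v. Kj s (0 + (1 / y) * v) * (exp (- (2 * y * (0 + (1 / y) * v))) - 1) \<partial>lborel)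
        = (\<integral>v. y powr (1 + s) * (Kj s v * (exp (- (2 * 1 * v)) - 1)) \<partial>lborel)"
    proof (intro Bochner_Integration.integral_cong refl)
      fix v :: real
      show "Kj s (0 + 1 / y * v) * (exp (- (2 * y * (0 + 1 / y * v))) - 1) = y powr (1 + s) * (Kj s v * (exp (- (2 * 1 * v)) - 1))"
      proof (cases "0 < v")
        case True
        have "(v / y) powr (-1 - s) = y powr (1 + s) * v powr (-1 - s)"
        proof -
          have e: "y powr (1 + s) * y powr (- 1 - s) = 1"
            using y by (simp add: powr_add[symmetric])
          have "(v / y) powr (-1 - s) = v powr (-1 - s) / y powr (-1 - s)" by (rule powr_divide)
          also have "\<dots> = y powr (1 + s) * v powr (-1 - s)"
            using y e by (simp add: field_simps)
          finally show ?thesis .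
        qed
        then show ?thesis using True y by (simp add: Kj_def)
      next
        case False
        then have "\<not> 0 < v / y" using y by (simp add: divide_less_0_iff not_less zero_less_divide_iff)
        then show ?thesis using y False by (simp add: Kj_def)
      qed
    qed
    also have "\<dots> = y powr (1 + s) * \<Phi> 1" unfolding \<Phi>_def by simp
    finally show ?thesis using y by (simp add: powr_add)
  qed
  have k1: "\<Phi> 1 + Jc = \<kappa>" using \<kappa>[of 1] unfolding \<Psi>_def by simp
  have k2: "2 powr s * (\<Phi> 1 + Jc) = \<kappa>" using \<kappa>[of 2] scale[of 2] unfolding \<Psi>_def by (simp add: algebra_simps)
  have "(1::real) < 2 powr s" using s by simp
  then have "\<kappa> = 0" using k1 k2 by (smt (verit, best) mult_cancel_right1)
  then have "\<Psi> x = 0" using \<kappa>[of x] x by simp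
  then show ?thesis unfolding \<Psi>_def \<Phi>_def Jc_def by linarith
qed

lemma alg1: "A * (B - B * C * E) * (u / c2) = (A * u) * B / c2 * (1 - C * E)" for A B C E u c2 :: real
  by (simp add: divide_inverse algebra_simps)

lemma subst_alg:
  fixes c sn x s :: real and d :: nat
  assumes c: "0 < c" and sn: "0 < sn" and pyth: "sn\<^sup>2 + c\<^sup>2 = 1"
  shows "((sn / c)\<^sup>2) powr (-1 - s) * ((1 + (sn / c)\<^sup>2) powr (s - 1)
      - (1 + (sn / c)\<^sup>2) powr (s - 1 + real d) * exp (2 * (sn / c)\<^sup>2) * exp (- (2 * x * (sn / c)\<^sup>2)))
      * ((sn / c) / c\<^sup>2)
    = c / sn powr (1 + 2 * s) * (1 - exp (- 2 * (sn / c)\<^sup>2 * (x - 1)) / c ^ (2 * d))"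
proof -
  define u where "u = sn / c"
  have u: "0 < u" using c sn by (simp add: u_def)
  define E where "E = exp (- 2 * u\<^sup>2 * (x - 1))"
  have w1: "1 + u\<^sup>2 = c powr (-2)"
  proof -
    have "1 + u\<^sup>2 = (c\<^sup>2 + sn\<^sup>2) / c\<^sup>2" using c by (simp add: u_def field_simps power2_eq_square)
    also have "\<dots> = 1 / c\<^sup>2" using pyth by (simp add: add.commute)
    also have "c\<^sup>2 = c powr 2" using powr_realpow[OF c, of 2] by simp
    also have "1 / c powr 2 = c powr (-2)" by (rule powr_minus_divide[symmetric])
    finally show ?thesis .
  qed
  have eE: "exp (2 * u\<^sup>2) * exp (- (2 * x * u\<^sup>2)) = E"
  proof -
    have "exp (2 * u\<^sup>2) * exp (- (2 * x * u\<^sup>2)) = exp (2 * u\<^sup>2 + - (2 * x * u\<^sup>2))"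
      by (simp only: exp_add)
    also have "2 * u\<^sup>2 + - (2 * x * u\<^sup>2) = - 2 * u\<^sup>2 * (x - 1)" by (simp add: algebra_simps)
    finally show ?thesis unfolding E_def .
  qed
  have p1: "(u\<^sup>2) powr (-1 - s) = u powr (-2 - 2 * s)"
  proof -
    have "u\<^sup>2 = u powr 2" using powr_realpow[OF u, of 2] by simp
    then have "(u\<^sup>2) powr (-1 - s) = u powr (2 * (-1 - s))" by (simp only: powr_powr)
    also have "2 * (-1 - s) = -2 - 2 * s" by simp
    finally show ?thesis .
  qed
  have p2: "(1 + u\<^sup>2) powr (s - 1) = c powr (2 - 2 * s)"
  proof -
    have "(1 + u\<^sup>2) powr (s - 1) = c powr (-2 * (s - 1))" unfolding w1 by (simp only: powr_powr)
    also have "-2 * (s - 1) = 2 - 2 * s" by simp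
    finally show ?thesis .
  qed
  have p3: "(1 + u\<^sup>2) powr (s - 1 + real d) = c powr (2 - 2 * s) * c powr (- 2 * real d)"
  proof -
    have "(1 + u\<^sup>2) powr (s - 1 + real d) = c powr (-2 * (s - 1 + real d))" unfolding w1 by (simp only: powr_powr)
    also have "-2 * (s - 1 + real d) = (2 - 2 * s) + (- 2 * real d)" by simp
    also have "c powr \<dots> = c powr (2 - 2 * s) * c powr (- 2 * real d)" by (rule powr_add)
    finally show ?thesis .
  qed
  have p4: "c powr (- 2 * real d) = 1 / c ^ (2 * d)"
  proof -
    have "c powr (- 2 * real d) = 1 / c powr (real (2 * d))" by (simp add: powr_minus_divide[symmetric])
    also have "c powr (real (2 * d)) = c ^ (2 * d)" by (rule powr_realpow[OF c])
    finally show ?thesis .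
  qed
  have p5: "u powr (-2 - 2 * s) * u = u powr (-1 - 2 * s)"
    using mult_powr_eq[OF u, of "-2 - 2 * s"] by (simp add: mult.commute)
  have p6: "u powr (-1 - 2 * s) = c powr (1 + 2 * s) / sn powr (1 + 2 * s)"
  proof -
    have "u powr (-1 - 2 * s) = u powr (- (1 + 2 * s))" by simp
    also have "\<dots> = 1 / u powr (1 + 2 * s)" by (rule powr_minus_divide)
    also have "u powr (1 + 2 * s) = sn powr (1 + 2 * s) / c powr (1 + 2 * s)"
      unfolding u_def by (rule powr_divide)
    finally show ?thesis by simp
  qed
  have p7: "c powr (1 + 2 * s) * c powr (2 - 2 * s) / c\<^sup>2 = c"
  proof -
    have "c powr (1 + 2 * s) * c powr (2 - 2 * s) = c powr ((1 + 2 * s) + (2 - 2 * s))" by (rule powr_add[symmetric])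
    also have "(1 + 2 * s) + (2 - 2 * s) = real 3" by simp
    also have "c powr real 3 = c ^ 3" by (rule powr_realpow[OF c])
    finally show ?thesis using c by (simp add: power2_eq_square power3_eq_cube)
  qed
  have "((sn / c)\<^sup>2) powr (-1 - s) * ((1 + (sn / c)\<^sup>2) powr (s - 1)
      - (1 + (sn / c)\<^sup>2) powr (s - 1 + real d) * exp (2 * (sn / c)\<^sup>2) * exp (- (2 * x * (sn / c)\<^sup>2)))
      * ((sn / c) / c\<^sup>2)
    = u powr (-2 - 2 * s) * (c powr (2 - 2 * s) - c powr (2 - 2 * s) * c powr (- 2 * real d) * E) * (u / c\<^sup>2)"
    unfolding u_def[symmetric] p1 p2 p3 eE[symmetric] by (simp only: mult.assoc)
  also have "\<dots> = (u powr (-2 - 2 * s) * u) * c powr (2 - 2 * s) / c\<^sup>2 * (1 - c powr (- 2 * real d) * E)"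
    by (rule alg1)
  also have "\<dots> = (c powr (1 + 2 * s) * c powr (2 - 2 * s) / c\<^sup>2) / sn powr (1 + 2 * s) * (1 - E / c ^ (2 * d))"
    unfolding p5 p6 p4 by simp
  also have "\<dots> = c / sn powr (1 + 2 * s) * (1 - exp (- 2 * (sn / c)\<^sup>2 * (x - 1)) / c ^ (2 * d))"
    unfolding p7 E_def u_def ..
  finally show ?thesis .
qed

definition bb :: real where "bb = (tan (pi / 8))\<^sup>2"

lemma tan_half_pos: "0 < \<theta> \<Longrightarrow> \<theta> \<le> pi / 4 \<Longrightarrow> 0 < tan (\<theta> / 2)"
  by (intro tan_gt_zero) auto

lemma cos_half_pos: "0 \<le> \<theta> \<Longrightarrow> \<theta> \<le> pi / 4 \<Longrightarrow> 0 < cos (\<theta> / 2)"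
  by (rule cos_gt_zero_pi) (use pi_gt_zero in linarith)+

lemma sin_half_pos: "0 < \<theta> \<Longrightarrow> \<theta> \<le> pi / 4 \<Longrightarrow> 0 < sin (\<theta> / 2)"
  by (intro sin_gt_zero) auto

lemma bb_pos: "0 < bb"
  unfolding bb_def using tan_half_pos[of "pi/4"] by simp

definition ft :: "real \<Rightarrow> nat \<Rightarrow> real \<Rightarrow> real \<Rightarrow> real" where
  "ft s d x \<theta> = beta_s s \<theta> * (1 - exp (- 2 * (tan (\<theta> / 2))\<^sup>2 * (x - 1)) / (cos (\<theta> / 2)) ^ (2 * d))"

definition hw :: "real \<Rightarrow> nat \<Rightarrow> real \<Rightarrow> real \<Rightarrow> real" where
  "hw s d x w = w powr (-1 - s) * ((1 + w) powr (s - 1)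
      - (1 + w) powr (s - 1 + real d) * exp (2 * w) * exp (- (2 * x * w)))"

lemma ft_0: "ft s d x 0 = 0"
  by (simp add: ft_def beta_s_def)

lemma ft_even: "ft s d x (- \<theta>) = ft s d x \<theta>"
  by (simp add: ft_def beta_s_def)

lemma hw_0: "hw s d x 0 = 0"
  by (simp add: hw_def)

lemma hw_ft:
  assumes "0 \<le> \<theta>" "\<theta> \<le> pi / 4"
  shows "hw s d x ((tan (\<theta> / 2))\<^sup>2) * (tan (\<theta> / 2) / (cos (\<theta> / 2))\<^sup>2) = ft s d x \<theta>"
proof (cases "\<theta> = 0")
  case True
  then show ?thesis by (simp add: hw_0 ft_0)
next
  case False
  then have th: "0 < \<theta>" using assms by simp
  have c: "0 < cos (\<theta> / 2)" using cos_half_pos assms by blast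
  have sn: "0 < sin (\<theta> / 2)" using sin_half_pos th assms by blast
  have py: "(sin (\<theta> / 2))\<^sup>2 + (cos (\<theta> / 2))\<^sup>2 = 1" by simp
  have t: "tan (\<theta> / 2) = sin (\<theta> / 2) / cos (\<theta> / 2)" by (simp add: tan_def)
  show ?thesis
    using subst_alg[OF c sn py, of s d x] c sn
    unfolding hw_def ft_def beta_s_def t by simp
qed

lemma subst_main:
  assumes int: "integrable lborel (\<lambda>w. indicator {0<..<bb} w * hw s d x w)"
  shows "set_integrable lborel {-pi/4..pi/4} (ft s d x)"
    and "(LINT \<theta>:{-pi/4..pi/4}|lborel. ft s d x \<theta>) = 2 * (\<integral>w. indicator {0<..<bb} w * hw s d x w \<partial>lborel)"
proof -
  let ?g = "\<lambda>\<theta>::real. (tan (\<theta> / 2))\<^sup>2"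
  let ?g' = "\<lambda>\<theta>::real. tan (\<theta> / 2) / (cos (\<theta> / 2))\<^sup>2"
  have hwm: "hw s d x \<in> borel_measurable borel" unfolding hw_def[abs_def] by measurable
  have AEb: "AE w in lborel. indicator {0..bb} w * hw s d x w = indicator {0<..<bb} w * hw s d x w"
    using AE_lborel_singleton[of bb]
    by eventually_elim (auto simp: indicator_def hw_0)
  have int2: "set_integrable lborel {?g 0..?g (pi/4)} (hw s d x)"
  proof -
    have "integrable lborel (\<lambda>w. indicator {0..bb} w * hw s d x w)"
      using int by (subst integrable_cong_AE[OF _ _ AEb]) (use hwm in auto)
    then show ?thesis by (simp add: set_integrable_def bb_def)
  qed
  have derivg: "(?g has_real_derivative ?g' \<theta>) (at \<theta>)" if "\<theta> \<in> {0..pi/4}" for \<theta>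
  proof -
    have c: "cos (\<theta> / 2) \<noteq> 0" using cos_half_pos[of \<theta>] that by auto
    have "(?g has_real_derivative 2 * tan (\<theta> / 2) * (inverse ((cos (\<theta> / 2))\<^sup>2) * (1 / 2))) (at \<theta>)"
      using c by (auto intro!: derivative_eq_intros)
    then show ?thesis by (simp add: field_simps)
  qed
  have contg': "continuous_on {0..pi/4} ?g'"
  proof (intro continuous_intros ballI)
    fix \<theta> :: real assume "\<theta> \<in> {0..pi/4}"
    then have "0 < cos (\<theta> / 2)" using cos_half_pos by auto
    then show "cos (\<theta> / 2) \<noteq> 0" "(cos (\<theta> / 2))\<^sup>2 \<noteq> 0" by auto
  qed auto
  have g'nn: "0 \<le> ?g' \<theta>" if "\<theta> \<in> {0..pi/4}" for \<theta>
  proof (cases "\<theta> = 0")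
    case False
    then show ?thesis using tan_half_pos[of \<theta>] that by auto
  qed simp
  have pi4: "0 \<le> pi / 4" by simp
  note S = integral_substitution[OF int2 derivg contg' g'nn pi4]
  have eq1: "?g' \<theta> * hw s d x (?g \<theta>) * indicator {0..pi/4} \<theta> = indicator {0..pi/4} \<theta> * ft s d x \<theta>" for \<theta>
    using hw_ft[of \<theta> s d x] by (auto simp: indicator_def mult_ac)
  have I0: "integrable lborel (\<lambda>\<theta>. indicator {0..pi/4} \<theta> * ft s d x \<theta>)"
  proof -
    have "integrable lborel (\<lambda>\<theta>. indicator {0..pi/4} \<theta> *\<^sub>R (hw s d x (?g \<theta>) * ?g' \<theta>))"
      using S(1) by (simp add: set_integrable_def)
    then show ?thesis by (rule Bochner_Integration.integrable_cong[THEN iffD1, rotated 2]) (use eq1 in \<open>auto simp: mult_ac\<close>)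
  qed
  have V0: "(\<integral>\<theta>. indicator {0..pi/4} \<theta> * ft s d x \<theta> \<partial>lborel) = (\<integral>w. indicator {0<..<bb} w * hw s d x w \<partial>lborel)"
  proof -
    have "(\<integral>\<theta>. indicator {0..pi/4} \<theta> * ft s d x \<theta> \<partial>lborel) = (LBINT \<theta>. hw s d x (?g \<theta>) * ?g' \<theta> * indicator {0..pi/4} \<theta>)"
      by (intro Bochner_Integration.integral_cong refl) (use eq1 in \<open>auto simp: mult_ac\<close>)
    also have "\<dots> = (LBINT w. hw s d x w * indicator {?g 0..?g (pi/4)} w)" using S(2) by simp
    also have "\<dots> = (\<integral>w. indicator {0..bb} w * hw s d x w \<partial>lborel)" by (simp add: bb_def mult.commute)
    also have "\<dots> = (\<integral>w. indicator {0<..<bb} w * hw s d x w \<partial>lborel)"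
      by (rule integral_cong_AE[OF _ _ AEb]) (use hwm in auto)
    finally show ?thesis .
  qed
  have I1: "integrable lborel (\<lambda>\<theta>. indicator {0..pi/4} (0 + (-1) * \<theta>) * ft s d x (0 + (-1) * \<theta>))"
    using lborel_integrable_real_affine[OF I0, of "-1" 0] by simp
  have V1: "(\<integral>\<theta>. indicator {0..pi/4} (0 + (-1) * \<theta>) * ft s d x (0 + (-1) * \<theta>) \<partial>lborel)
       = (\<integral>\<theta>. indicator {0..pi/4} \<theta> * ft s d x \<theta> \<partial>lborel)"
    using lborel_integral_real_affine[of "-1" "\<lambda>\<theta>. indicator {0..pi/4} \<theta> * ft s d x \<theta>" 0] by simp
  have split: "indicator {-pi/4..pi/4} \<theta> * ft s d x \<theta>
      = indicator {0..pi/4} \<theta> * ft s d x \<theta> + indicator {0..pi/4} (0 + (-1) * \<theta>) * ft s d x (0 + (-1) * \<theta>)" for \<theta>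
    by (cases "\<theta> = 0") (auto simp: indicator_def ft_0 ft_even)
  have Isum: "integrable lborel (\<lambda>\<theta>. indicator {-pi/4..pi/4} \<theta> * ft s d x \<theta>)"
    unfolding split using I0 I1 by simp
  then show "set_integrable lborel {-pi/4..pi/4} (ft s d x)" by (simp add: set_integrable_def)
  have "(LINT \<theta>:{-pi/4..pi/4}|lborel. ft s d x \<theta>) = (\<integral>\<theta>. indicator {-pi/4..pi/4} \<theta> * ft s d x \<theta> \<partial>lborel)"
    by (simp add: set_lebesgue_integral_def)
  also have "\<dots> = (\<integral>\<theta>. indicator {0..pi/4} \<theta> * ft s d x \<theta> \<partial>lborel)
     + (\<integral>\<theta>. indicator {0..pi/4} (0 + (-1) * \<theta>) * ft s d x (0 + (-1) * \<theta>) \<partial>lborel)"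
    unfolding split using I0 I1 by (rule Bochner_Integration.integral_add)
  also have "\<dots> = 2 * (\<integral>w. indicator {0<..<bb} w * hw s d x w \<partial>lborel)" unfolding V1 V0 by simp
  finally show "(LINT \<theta>:{-pi/4..pi/4}|lborel. ft s d x \<theta>) = 2 * (\<integral>w. indicator {0<..<bb} w * hw s d x w \<partial>lborel)" .
qed

definition Kt :: "real \<Rightarrow> real \<Rightarrow> real \<Rightarrow> real" where
  "Kt b \<alpha> w = indicator {b<..} w * w powr \<alpha>"

lemma Kt_meas: "Kt b \<alpha> \<in> borel_measurable borel"
  unfolding Kt_def[abs_def] by measurable

lemma kdom_Kt:
  assumes b: "0 < b"
  shows "kdom (Kt b \<alpha>) (b powr (- real m)) (\<alpha> + real m)"
  unfolding kdom_def
proof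
  fix w :: real
  show "\<bar>Kt b \<alpha> w\<bar> \<le> b powr (- real m) * (indicator {0<..} w * w powr (\<alpha> + real m))"
  proof (cases "b < w")
    case True
    then have w: "0 < w" using b by simp
    have "w powr (- real m) \<le> b powr (- real m)"
      using True b by (intro powr_mono2') auto
    have e: "w powr (- real m) * w powr real m = 1"
      using w by (simp add: powr_add[symmetric])
    have "w powr \<alpha> = w powr \<alpha> * (w powr (- real m) * w powr real m)" unfolding e by simp
    also have "\<dots> \<le> w powr \<alpha> * (b powr (- real m) * w powr real m)"
      using \<open>w powr (- real m) \<le> b powr (- real m)\<close> by (intro mult_left_mono mult_right_mono) auto
    also have "\<dots> = b powr (- real m) * w powr (\<alpha> + real m)"
      by (simp add: powr_add mult_ac)
    finally have "w powr \<alpha> \<le> b powr (- real m) * w powr (\<alpha> + real m)" .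
    then show ?thesis using True w by (simp add: Kt_def)
  next
    case False
    then show ?thesis by (simp add: Kt_def indicator_def)
  qed
qed

lemma fam_Kt:
  assumes b: "0 < b"
  shows "fam M (lapfam (Kt b \<alpha>))"
proof -
  define m where "m = nat \<lceil>\<bar>\<alpha>\<bar> + \<bar>M\<bar> + 2\<rceil>"
  have m: "real m \<ge> \<bar>\<alpha>\<bar> + \<bar>M\<bar> + 2" unfolding m_def by linarith
  have g: "-1 < \<alpha> + real m" using m by linarith
  have "fam (- (\<alpha> + real m + 1)) (lapfam (Kt b \<alpha>))"
    by (rule fam_lap[OF Kt_meas kdom_Kt[OF b] g])
  then show ?thesis by (rule fam_mono) (use m in linarith)
qed

lemma ind_split_AE:
  fixes b :: real
  assumes "0 < b"
  shows "AE w in lborel. indicator {0<..} w = (indicator {0<..<b} w + indicator {b<..} w :: real)"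
  using AE_lborel_singleton[of b] by eventually_elim (use assms in \<open>auto simp: indicator_def\<close>)

lemma integrable_restrict:
  fixes f :: "real \<Rightarrow> real"
  assumes "integrable lborel (\<lambda>w. indicator T w * f w)" "S \<subseteq> T" "S \<in> sets lborel"
  shows "integrable lborel (\<lambda>w. indicator S w * f w)"
proof -
  have "integrable lborel (\<lambda>w. indicator S w *\<^sub>R (indicator T w * f w))"
    by (rule integrable_mult_indicator) (use assms in auto)
  then show ?thesis
    by (rule Bochner_Integration.integrable_cong[THEN iffD1, rotated 2]) (use assms in \<open>auto simp: indicator_def\<close>)
qed

lemma P3_val:
  fixes \<gamma> y b :: real
  assumes g: "-1 < \<gamma>" and y: "0 < y" and b: "0 < b"
  shows "integrable lborel (\<lambda>w. indicator {0<..<b} w * w powr \<gamma> * exp (- (y * w)))"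
    and "(\<integral>w. indicator {0<..<b} w * w powr \<gamma> * exp (- (y * w)) \<partial>lborel)
      = Gamma (\<gamma> + 1) * y powr (- (\<gamma> + 1)) - (\<integral>w. indicator {b<..} w * w powr \<gamma> * exp (- (y * w)) \<partial>lborel)"
proof -
  have G: "integrable lborel (\<lambda>w. indicator {0<..} w * w powr \<gamma> * exp (- (y * w)))"
    by (rule gamma_integrable[OF g y])
  have G': "integrable lborel (\<lambda>w. indicator {0<..} w * (w powr \<gamma> * exp (- (y * w))))"
    using G by (simp only: mult.assoc)
  have I1: "integrable lborel (\<lambda>w. indicator {0<..<b} w * w powr \<gamma> * exp (- (y * w)))"
    using integrable_restrict[OF G', of "{0<..<b}"] by (simp add: mult.assoc subset_eq)
  have I2: "integrable lborel (\<lambda>w. indicator {b<..} w * w powr \<gamma> * exp (- (y * w)))"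
    using integrable_restrict[OF G', of "{b<..}"] b by (simp add: mult.assoc subset_eq)
  show "integrable lborel (\<lambda>w. indicator {0<..<b} w * w powr \<gamma> * exp (- (y * w)))" by (fact I1)
  have "Gamma (\<gamma> + 1) * y powr (- (\<gamma> + 1)) = (\<integral>w. indicator {0<..} w * w powr \<gamma> * exp (- (y * w)) \<partial>lborel)"
    using gamma_integral[OF g y] by simp
  also have "\<dots> = (\<integral>w. indicator {0<..<b} w * w powr \<gamma> * exp (- (y * w)) + indicator {b<..} w * w powr \<gamma> * exp (- (y * w)) \<partial>lborel)"
    by (rule integral_cong_AE) (use ind_split_AE[OF b] in \<open>auto elim!: eventually_mono simp: algebra_simps\<close>)
  also have "\<dots> = (\<integral>w. indicator {0<..<b} w * w powr \<gamma> * exp (- (y * w)) \<partial>lborel) + (\<integral>w. indicator {b<..} w * w powr \<gamma> * exp (- (y * w)) \<partial>lborel)"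
    by (rule Bochner_Integration.integral_add[OF I1 I2])
  finally show "(\<integral>w. indicator {0<..<b} w * w powr \<gamma> * exp (- (y * w)) \<partial>lborel)
      = Gamma (\<gamma> + 1) * y powr (- (\<gamma> + 1)) - (\<integral>w. indicator {b<..} w * w powr \<gamma> * exp (- (y * w)) \<partial>lborel)"
    by simp
qed

lemma Kt_integrable:
  assumes b: "0 < b" and y: "0 < y"
  shows "integrable lborel (\<lambda>w. Kt b \<alpha> w * exp (- (y * w)))"
proof -
  define m where "m = nat \<lceil>\<bar>\<alpha>\<bar>\<rceil> + 1"
  have g: "-1 < \<alpha> + real m" unfolding m_def by linarith
  show ?thesis using kdom_integrable[OF Kt_meas kdom_Kt[OF b, of \<alpha> m] g y, of 0] by simp
qed

lemma P2_val:
  fixes s x b :: real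
  assumes s: "0 < s" "s < 1" and x: "0 < x" and b: "0 < b"
  shows "integrable lborel (\<lambda>w. indicator {0<..<b} w * (Kj s w * (exp (- (2 * x * w)) - 1)))"
    and "(\<integral>w. indicator {0<..<b} w * (Kj s w * (exp (- (2 * x * w)) - 1)) \<partial>lborel)
        = - (2 powr s * Gamma (1 - s) / s) * x powr s - (Lp (Kt b (-1 - s)) x - b powr (- s) / s)"
proof -
  let ?f = "\<lambda>w. w powr (-1 - s) * (exp (- (2 * x * w)) - 1)"
  have KJ: "Kj s w * (exp (- (2 * x * w)) - 1) = indicator {0<..} w * ?f w" for w
    by (simp add: Kj_def)
  have IJ: "integrable lborel (\<lambda>w. indicator {0<..} w * ?f w)"
    using Kj_IE[OF s x] unfolding KJ .
  have I1: "integrable lborel (\<lambda>w. indicator {0<..<b} w * ?f w)"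
    by (rule integrable_restrict[OF IJ]) auto
  have I2: "integrable lborel (\<lambda>w. indicator {b<..} w * ?f w)"
    by (rule integrable_restrict[OF IJ]) (use b in auto)
  have ind: "indicator S w * (Kj s w * (exp (- (2 * x * w)) - 1)) = indicator S w * ?f w" if "S \<subseteq> {0<..}" for S w
    using that by (auto simp: Kj_def indicator_def)
  show "integrable lborel (\<lambda>w. indicator {0<..<b} w * (Kj s w * (exp (- (2 * x * w)) - 1)))"
    using I1 by (subst ind) auto
  have "- (2 powr s * Gamma (1 - s) / s) * x powr s = (\<integral>w. indicator {0<..} w * ?f w \<partial>lborel)"
    using J_val[OF s x] unfolding KJ by simp
  also have "\<dots> = (\<integral>w. indicator {0<..<b} w * ?f w + indicator {b<..} w * ?f w \<partial>lborel)"
    by (rule integral_cong_AE) (use ind_split_AE[OF b] in \<open>auto elim!: eventually_mono simp: algebra_simps\<close>)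
  also have "\<dots> = (\<integral>w. indicator {0<..<b} w * ?f w \<partial>lborel) + (\<integral>w. indicator {b<..} w * ?f w \<partial>lborel)"
    by (rule Bochner_Integration.integral_add[OF I1 I2])
  also have "(\<integral>w. indicator {b<..} w * ?f w \<partial>lborel)
      = (\<integral>w. Kt b (-1 - s) w * exp (- (2 * x * w)) - indicator {b<..} w * w powr (-1 - s) \<partial>lborel)"
    by (intro Bochner_Integration.integral_cong refl) (simp add: Kt_def algebra_simps)
  also have "\<dots> = Lp (Kt b (-1 - s)) x - b powr (- s) / s"
    using Kt_integrable[OF b, of "2 * x" "-1 - s"] x tail_int[OF b s(1)]
    by (simp add: Lp_def Bochner_Integration.integral_diff)
  finally have F: "- (2 powr s * Gamma (1 - s) / s) * x powr s
     = (\<integral>w. indicator {0<..<b} w * ?f w \<partial>lborel) + (Lp (Kt b (-1 - s)) x - b powr (- s) / s)" .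
  have eqI: "(\<integral>w. indicator {0<..<b} w * (Kj s w * (exp (- (2 * x * w)) - 1)) \<partial>lborel)
     = (\<integral>w. indicator {0<..<b} w * ?f w \<partial>lborel)"
    by (intro Bochner_Integration.integral_cong refl ind) auto
  show "(\<integral>w. indicator {0<..<b} w * (Kj s w * (exp (- (2 * x * w)) - 1)) \<partial>lborel)
        = - (2 powr s * Gamma (1 - s) / s) * x powr s - (Lp (Kt b (-1 - s)) x - b powr (- s) / s)"
    unfolding eqI using F by linarith
qed

lemma bb_ratio: "(1 + bb) / bb = 2 * (2 + sqrt 2)"
proof -
  let ?a = "pi / 8"
  have c: "0 < cos ?a" using cos_half_pos[of "pi/4"] by simp
  have sn: "0 < sin ?a" using sin_half_pos[of "pi/4"] by simp
  have "cos (2 * ?a) = 1 - 2 * sin ?a ^ 2" by (rule cos_double_sin)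
  moreover have "cos (2 * ?a) = sqrt 2 / 2" using cos_45 by simp
  ultimately have s2: "(sin ?a)\<^sup>2 = (2 - sqrt 2) / 4" by simp
  have "(1 + bb) / bb = ((cos ?a)\<^sup>2 + (sin ?a)\<^sup>2) / (sin ?a)\<^sup>2"
    unfolding bb_def tan_def using c sn by (simp add: field_simps power2_eq_square)
  also have "\<dots> = 1 / (sin ?a)\<^sup>2" by simp
  also have "\<dots> = 4 / (2 - sqrt 2)" unfolding s2 by simp
  also have "\<dots> = 2 * (2 + sqrt 2)"
  proof -
    have q: "sqrt 2 * sqrt 2 = (2::real)" by simp
    have "2 - sqrt 2 \<noteq> 0"
    proof
      assume "2 - sqrt 2 = 0"
      then have "sqrt 2 = 2" by simp
      with q show False by simp
    qed
    then show ?thesis using q by (simp add: field_simps algebra_simps)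
  qed
  finally show ?thesis .
qed

definition qd :: "real \<Rightarrow> nat \<Rightarrow> real" where "qd s d = s - 1 + real d"

definition rN :: "real \<Rightarrow> nat \<Rightarrow> nat \<Rightarrow> real \<Rightarrow> real" where
  "rN s d N w = (gfun (qd s d) w - (\<Sum>i\<le>N. gc (qd s d) i * w ^ i)) / w ^ Suc N"

definition Kq :: "real \<Rightarrow> nat \<Rightarrow> nat \<Rightarrow> real \<Rightarrow> real" where
  "Kq s d N w = indicator {0<..<bb} w * w powr (real N - s) * rN s d N w"

lemma Kq_meas: "Kq s d N \<in> borel_measurable borel"
  unfolding Kq_def[abs_def] rN_def[abs_def] gfun_def[abs_def] by measurable

lemma Kq_kdom: "\<exists>A. kdom (Kq s d N) A (real N - s)"
proof -
  obtain B where B: "\<forall>w. 0 < w \<and> w < bb \<longrightarrow> \<bar>rN s d N w\<bar> \<le> B"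
    using taylor_g[OF bb_pos, of "qd s d" N] unfolding rN_def by blast
  show ?thesis unfolding kdom_def
  proof (intro exI[of _ "max B 0"] allI)
    fix w :: real
    show "\<bar>Kq s d N w\<bar> \<le> max B 0 * (indicator {0<..} w * w powr (real N - s))"
    proof (cases "0 < w \<and> w < bb")
      case True
      have "\<bar>Kq s d N w\<bar> = w powr (real N - s) * \<bar>rN s d N w\<bar>" using True by (simp add: Kq_def abs_mult)
      also have "\<dots> \<le> w powr (real N - s) * max B 0" using B True by (intro mult_left_mono) auto
      finally show ?thesis using True by (simp add: mult.commute)
    next
      case False
      then show ?thesis by (auto simp: Kq_def indicator_def)
    qed
  qed
qed

lemma fam_Kq:
  assumes s1: "s < 1"
  shows "fam (s - real N - 1) (lapfam (Kq s d N))"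
proof -
  obtain A where A: "kdom (Kq s d N) A (real N - s)" using Kq_kdom by blast
  have "fam (- (real N - s + 1)) (lapfam (Kq s d N))"
    by (rule fam_lap[OF Kq_meas A]) (use s1 in simp)
  then show ?thesis by (simp add: algebra_simps)
qed

lemma powr_times_pow: "0 < w \<Longrightarrow> w powr a * w ^ n = w powr (a + real n)" for w a :: real
  by (simp add: powr_add powr_realpow)

lemma alg2: "W * (A - (1 + S + P * R) * e) = - (W * (1 - A)) - W * (e - 1) - (W * S) * e - (W * P) * R * e"
  for W A S P R e :: real
  by (simp add: algebra_simps)

lemma hw_decomp:
  assumes w: "0 < w"
  shows "hw s d x w = - (w powr (-1 - s) * (1 - (1 + w) powr (s - 1))) - Kj s w * (exp (- (2 * x * w)) - 1)
     - (\<Sum>i\<in>{1..N}. gc (qd s d) i * (w powr (real i - 1 - s) * exp (- (2 * x * w))))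
     - w powr (real N - s) * rN s d N w * exp (- (2 * x * w))"
proof -
  let ?q = "qd s d"
  let ?e = "exp (- (2 * x * w))"
  let ?W = "w powr (-1 - s)"
  let ?S = "\<Sum>i\<in>{1..N}. gc ?q i * w ^ i"
  have h1: "hw s d x w = ?W * ((1 + w) powr (s - 1) - gfun ?q w * ?e)"
    unfolding hw_def gfun_def qd_def by (simp add: mult.assoc)
  have sp: "(\<Sum>i\<le>N. gc ?q i * w ^ i) = 1 + ?S"
  proof -
    have "{..N} = insert 0 {1..N}" by auto
    then show ?thesis by (simp add: gc_0)
  qed
  have G: "gfun ?q w = 1 + ?S + w ^ Suc N * rN s d N w"
    using w unfolding rN_def sp[symmetric] by simp
  have WS: "?W * ?S * ?e = (\<Sum>i\<in>{1..N}. gc ?q i * (w powr (real i - 1 - s) * ?e))"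
  proof -
    have "?W * ?S * ?e = (\<Sum>i\<in>{1..N}. gc ?q i * ((?W * w ^ i) * ?e))"
      by (simp add: sum_distrib_left sum_distrib_right mult_ac)
    also have "\<dots> = (\<Sum>i\<in>{1..N}. gc ?q i * (w powr (real i - 1 - s) * ?e))"
    proof (intro sum.cong refl)
      fix i assume "i \<in> {1..N}"
      have "?W * w ^ i = w powr (real i - 1 - s)"
        using powr_times_pow[OF w, of "-1 - s" i] by (simp add: algebra_simps)
      then show "gc ?q i * ((?W * w ^ i) * ?e) = gc ?q i * (w powr (real i - 1 - s) * ?e)" by simp
    qed
    finally show ?thesis .
  qed
  have WP: "?W * w ^ Suc N = w powr (real N - s)"
    using powr_times_pow[OF w, of "-1 - s" "Suc N"] by (simp add: algebra_simps)
  have KJ: "Kj s w = ?W" using w by (simp add: Kj_def)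
  show ?thesis
    unfolding h1 G alg2 WS WP KJ ..
qed

definition cK :: "real \<Rightarrow> nat \<Rightarrow> nat \<Rightarrow> real" where
  "cK s d k = - 2 * gc (qd s d) k * Gamma (real k - s) * 2 powr (s - real k)"

definition Rem :: "real \<Rightarrow> nat \<Rightarrow> nat \<Rightarrow> real \<Rightarrow> real" where
  "Rem s d N x = 2 * Lp (Kt bb (-1 - s)) x + (\<Sum>i\<in>{1..N}. 2 * gc (qd s d) i * Lp (Kt bb (real i - 1 - s)) x)
     - 2 * Lp (Kq s d N) x"

lemma F_identity:
  assumes s: "0 < s" "s < 1" and x: "0 < x"
  shows "(LINT \<theta>:{-pi/4..pi/4}|lborel. ft s d x \<theta>) =
    (2 powr (1 + s) / s) * Gamma (1 - s) * x powr s - (2 powr (1 + s) * (2 + sqrt 2) powr s / s)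
    + (\<Sum>k=1..N. cK s d k * x powr (s - real k)) + Rem s d N x"
proof -
  let ?q = "qd s d"
  let ?ind = "indicator {0<..<bb} :: real \<Rightarrow> real"
  let ?e = "\<lambda>w. exp (- (2 * x * w))"
  define f1 where "f1 w = ?ind w * (- (w powr (-1 - s) * (1 - (1 + w) powr (s - 1))))" for w
  define f2 where "f2 w = ?ind w * (- (Kj s w * (exp (- (2 * x * w)) - 1)))" for w
  define f3 where "f3 i w = ?ind w * (gc ?q i * (w powr (real i - 1 - s) * exp (- (2 * x * w))))" for i w
  define f4 where "f4 w = Kq s d N w * exp (- (2 * x * w))" for w
  have dec: "?ind w * hw s d x w = f1 w + f2 w - (\<Sum>i\<in>{1..N}. f3 i w) - f4 w" for w
  proof (cases "0 < w \<and> w < bb")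
    case True
    then show ?thesis
      unfolding f1_def f2_def f3_def f4_def hw_decomp[OF conjunct1[OF True], of s d x N]
      by (simp add: Kq_def mult_ac)
  next
    case False
    then show ?thesis by (simp add: f1_def f2_def f3_def f4_def Kq_def)
  qed
  have I1: "integrable lborel f1"
    unfolding f1_def using A1_int(1)[OF bb_pos s] by simp
  have V1: "(\<integral>w. f1 w \<partial>lborel) = - (((1 + bb) powr s - 1) * bb powr (- s) / s)"
    unfolding f1_def using A1_int(2)[OF bb_pos s] by simp
  have I2: "integrable lborel f2"
    unfolding f2_def using P2_val(1)[OF s x bb_pos] by simp
  have V2: "(\<integral>w. f2 w \<partial>lborel) = (2 powr s * Gamma (1 - s) / s) * x powr s + (Lp (Kt bb (-1 - s)) x - bb powr (- s) / s)"
    unfolding f2_def using P2_val(2)[OF s x bb_pos] by simp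
  have g3: "-1 < real i - 1 - s" if "i \<in> {1..N}" for i using that s by auto
  have x2: "0 < 2 * x" using x by simp
  have I3: "integrable lborel (f3 i)" if "i \<in> {1..N}" for i
  proof -
    have "integrable lborel (\<lambda>w. gc ?q i * (?ind w * w powr (real i - 1 - s) * exp (- ((2 * x) * w))))"
      using P3_val(1)[OF g3[OF that] x2 bb_pos] by simp
    then show ?thesis unfolding f3_def by (simp add: mult_ac)
  qed
  have V3: "(\<integral>w. f3 i w \<partial>lborel) = gc ?q i * (Gamma (real i - s) * 2 powr (s - real i) * x powr (s - real i)
      - Lp (Kt bb (real i - 1 - s)) x)" if "i \<in> {1..N}" for i
  proof -
    have "(\<integral>w. f3 i w \<partial>lborel) = (\<integral>w. gc ?q i * (?ind w * w powr (real i - 1 - s) * exp (- ((2 * x) * w))) \<partial>lborel)"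
      unfolding f3_def by (intro Bochner_Integration.integral_cong refl) (simp add: mult_ac)
    also have "\<dots> = gc ?q i * (\<integral>w. ?ind w * w powr (real i - 1 - s) * exp (- ((2 * x) * w)) \<partial>lborel)"
      by (rule integral_mult_right_zero)
    also have "(\<integral>w. ?ind w * w powr (real i - 1 - s) * exp (- ((2 * x) * w)) \<partial>lborel)
        = Gamma (real i - 1 - s + 1) * (2 * x) powr (- (real i - 1 - s + 1))
          - (\<integral>w. indicator {bb<..} w * w powr (real i - 1 - s) * exp (- ((2 * x) * w)) \<partial>lborel)"
      by (rule P3_val(2)[OF g3[OF that] x2 bb_pos])
    also have "(\<integral>w. indicator {bb<..} w * w powr (real i - 1 - s) * exp (- ((2 * x) * w)) \<partial>lborel)
        = Lp (Kt bb (real i - 1 - s)) x" by (simp add: Lp_def Kt_def)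
    also have "Gamma (real i - 1 - s + 1) * (2 * x) powr (- (real i - 1 - s + 1))
        = Gamma (real i - s) * 2 powr (s - real i) * x powr (s - real i)"
      using x by (simp add: powr_mult)
    finally show ?thesis .
  qed
  obtain A where A: "kdom (Kq s d N) A (real N - s)" using Kq_kdom by blast
  have I4: "integrable lborel f4"
    unfolding f4_def using kdom_integrable[OF Kq_meas A _ x2, of 0] s by (simp add: mult_ac)
  have V4: "(\<integral>w. f4 w \<partial>lborel) = Lp (Kq s d N) x" unfolding f4_def Lp_def ..
  have I3s: "integrable lborel (\<lambda>w. \<Sum>i\<in>{1..N}. f3 i w)" using I3 by auto
  have Ihw: "integrable lborel (\<lambda>w. ?ind w * hw s d x w)"
    unfolding dec using I1 I2 I3s I4 by auto
  have Vhw: "(\<integral>w. ?ind w * hw s d x w \<partial>lborel)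
      = (\<integral>w. f1 w \<partial>lborel) + (\<integral>w. f2 w \<partial>lborel) - (\<Sum>i\<in>{1..N}. (\<integral>w. f3 i w \<partial>lborel)) - (\<integral>w. f4 w \<partial>lborel)"
    unfolding dec using I1 I2 I3s I4 I3 by (simp add: Bochner_Integration.integral_diff Bochner_Integration.integral_add integral_sum)
  have main: "(LINT \<theta>:{-pi/4..pi/4}|lborel. ft s d x \<theta>) = 2 * (\<integral>w. ?ind w * hw s d x w \<partial>lborel)"
    by (rule subst_main(2)[OF Ihw])
  have S3: "(\<Sum>i\<in>{1..N}. (\<integral>w. f3 i w \<partial>lborel))
     = (\<Sum>i\<in>{1..N}. gc ?q i * Gamma (real i - s) * 2 powr (s - real i) * x powr (s - real i))
       - (\<Sum>i\<in>{1..N}. gc ?q i * Lp (Kt bb (real i - 1 - s)) x)"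
    by (simp add: V3 sum_subtractf[symmetric] algebra_simps)
  have C1: "(1 + bb) powr s * bb powr (- s) = 2 powr s * (2 + sqrt 2) powr s"
  proof -
    have "(1 + bb) powr s * bb powr (- s) = ((1 + bb) / bb) powr s"
      using bb_pos by (simp add: powr_divide powr_minus divide_inverse[symmetric])
    also have "\<dots> = 2 powr s * (2 + sqrt 2) powr s" unfolding bb_ratio by (rule powr_mult)
    finally show ?thesis .
  qed
  have C2: "2 * 2 powr s = (2::real) powr (1 + s)" by (simp add: powr_add)
  have sumc: "(\<Sum>k=1..N. cK s d k * x powr (s - real k))
      = - 2 * (\<Sum>i\<in>{1..N}. gc ?q i * Gamma (real i - s) * 2 powr (s - real i) * x powr (s - real i))"
    unfolding cK_def by (simp add: sum_distrib_left mult_ac)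
  have sumr: "Rem s d N x = 2 * Lp (Kt bb (-1 - s)) x + 2 * (\<Sum>i\<in>{1..N}. gc ?q i * Lp (Kt bb (real i - 1 - s)) x)
     - 2 * Lp (Kq s d N) x"
    unfolding Rem_def by (simp add: sum_distrib_left mult_ac)
  show ?thesis
    unfolding main Vhw V1 V2 S3 V4 sumc sumr
    using C1 s by (simp add: field_simps C2[symmetric])
qed

definition pf :: "real \<Rightarrow> nat \<Rightarrow> real \<Rightarrow> real" where
  "pf p j x = (\<Prod>i<j. (p - real i)) * x powr (p - real j)"

lemma fam_pf: "fam p (pf p)"
  unfolding fam_def
proof (intro conjI allI impI)
  fix j :: nat and x :: real assume x: "1/2 < x"
  have "((\<lambda>x. (\<Prod>i<j. (p - real i)) * x powr (p - real j)) has_real_derivative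
      (\<Prod>i<j. (p - real i)) * ((p - real j) * x powr (p - real j - 1))) (at x)"
    using x by (auto intro!: derivative_eq_intros)
  moreover have "(\<Prod>i<j. (p - real i)) * ((p - real j) * x powr (p - real j - 1)) = pf p (Suc j) x"
    by (simp add: pf_def algebra_simps)
  ultimately show "(pf p j has_real_derivative pf p (Suc j) x) (at x)" unfolding pf_def[abs_def] by simp
next
  fix j :: nat
  show "\<exists>C. \<forall>x\<ge>1. \<bar>pf p j x\<bar> \<le> C * x powr (p - real j)"
    by (intro exI[of _ "\<bar>\<Prod>i<j. (p - real i)\<bar>"]) (auto simp: pf_def abs_mult)
qed

definition cf :: "real \<Rightarrow> nat \<Rightarrow> real \<Rightarrow> real" where
  "cf c j x = (if j = 0 then c else 0)"

lemma fam_cf: "fam 0 (cf c)"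
  unfolding fam_def
proof (intro conjI allI impI)
  fix j :: nat and x :: real
  show "(cf c j has_real_derivative cf c (Suc j) x) (at x)"
    unfolding cf_def by (cases "j = 0") auto
next
  fix j :: nat
  show "\<exists>C. \<forall>x\<ge>1. \<bar>cf c j x\<bar> \<le> C * x powr (0 - real j)"
  proof (intro exI[of _ "\<bar>c\<bar>"] allI impI)
    fix x :: real assume "1 \<le> x"
    then show "\<bar>cf c j x\<bar> \<le> \<bar>c\<bar> * x powr (0 - real j)" by (cases "j = 0") (auto simp: cf_def)
  qed
qed

definition RemF :: "real \<Rightarrow> nat \<Rightarrow> nat \<Rightarrow> nat \<Rightarrow> real \<Rightarrow> real" where
  "RemF s d N j x = 2 * lapfam (Kt bb (-1 - s)) j x
     + (\<Sum>i\<in>{1..N}. 2 * gc (qd s d) i * lapfam (Kt bb (real i - 1 - s)) j x)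
     + (- 2) * lapfam (Kq s d N) j x"

lemma lapfam_0: "lapfam K 0 = Lp K"
  unfolding lapfam_def by simp

lemma RemF_0: "RemF s d N 0 x = Rem s d N x"
  unfolding RemF_def Rem_def lapfam_0 by simp

lemma fam_RemF:
  assumes "s < 1"
  shows "fam (s - real N - 1) (RemF s d N)"
proof -
  have A: "fam (s - real N - 1) (\<lambda>j x. 2 * lapfam (Kt bb (-1 - s)) j x)"
    by (intro fam_scale fam_Kt bb_pos)
  have B: "fam (s - real N - 1) (\<lambda>j x. \<Sum>i\<in>{1..N}. 2 * gc (qd s d) i * lapfam (Kt bb (real i - 1 - s)) j x)"
    by (intro fam_sum fam_scale fam_Kt bb_pos) auto
  have C: "fam (s - real N - 1) (\<lambda>j x. (- 2) * lapfam (Kq s d N) j x)"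
    by (intro fam_scale fam_Kq assms)
  show ?thesis unfolding RemF_def[abs_def] by (intro fam_add A B C)
qed

lemma symbol_fam: "fam m H \<Longrightarrow> symbol_class m (\<lambda>z::'a::euclidean_space \<times> 'a. H 0 (lamf z))"
  unfolding fam_def by (intro symbol_comp) auto

lemma l1_eq: "l1 s (z :: 'a::euclidean_space \<times> 'a) = (LINT \<theta>:{-pi/4..pi/4}|lborel. ft s DIM('a) (lamf z) \<theta>)"
  unfolding l1_def ft_def lamf_def by simp

theorem lemma3p6:
  fixes s :: real
  assumes "DIM('a::euclidean_space) \<ge> 2" and "0 < s" and "s < 1"
  shows "symbol_class s (l1 s :: 'a \<times> 'a \<Rightarrow> real) \<and>
    (\<exists>c :: nat \<Rightarrow> real. \<forall>N::nat. N \<ge> 1 \<longrightarrow>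
       symbol_class (s - real N - 1)
         (\<lambda>(v :: 'a, \<xi>).
            let lam = 1 + (norm \<xi>)\<^sup>2 + (norm v)\<^sup>2 / 4 in
            l1 s (v, \<xi>)
            - ((2 powr (1 + s) / s) * Gamma (1 - s) * lam powr s
               - (2 powr (1 + s) * (2 + sqrt 2) powr s / s)
               + (\<Sum>k=1..N. c k * lam powr (s - real k)))))"
proof
  let ?d = "DIM('a) :: nat"
  have s: "0 < s" "s < 1" using assms by auto
  let ?cz = "2 powr (1 + s) / s * Gamma (1 - s)"
  let ?dz = "2 powr (1 + s) * (2 + sqrt 2) powr s / s"
  define HF where "HF j x = ?cz * pf s j x + cf (- ?dz) j x + cK s ?d 1 * pf (s - 1) j x + RemF s ?d 1 j x" for j x
  have famHF: "fam s HF"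
  proof -
    have "fam s (\<lambda>j x. ?cz * pf s j x)" by (intro fam_scale fam_pf)
    moreover have "fam s (cf (- ?dz))" by (rule fam_mono[OF fam_cf]) (use s in simp)
    moreover have "fam s (\<lambda>j x. cK s ?d 1 * pf (s - 1) j x)" by (rule fam_mono[OF fam_scale[OF fam_pf]]) simp
    moreover have "fam s (RemF s ?d 1)" by (rule fam_mono[OF fam_RemF[OF s(2)]]) simp
    ultimately show ?thesis unfolding HF_def[abs_def] by (intro fam_add)
  qed
  have "l1 s = (\<lambda>z::'a \<times> 'a. HF 0 (lamf z))"
  proof
    fix z :: "'a \<times> 'a"
    have x: "0 < lamf z" using lamf_ge1[of z] by linarith
    show "l1 s z = HF 0 (lamf z)"
      unfolding l1_eq F_identity[OF s x, of ?d 1]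
      by (simp add: HF_def pf_def cf_def RemF_0)
  qed
  then show "symbol_class s (l1 s :: 'a \<times> 'a \<Rightarrow> real)"
    using symbol_fam[OF famHF] by simp
  show "\<exists>c :: nat \<Rightarrow> real. \<forall>N::nat. N \<ge> 1 \<longrightarrow>
       symbol_class (s - real N - 1)
         (\<lambda>(v :: 'a, \<xi>).
            let lam = 1 + (norm \<xi>)\<^sup>2 + (norm v)\<^sup>2 / 4 in
            l1 s (v, \<xi>)
            - ((2 powr (1 + s) / s) * Gamma (1 - s) * lam powr s
               - (2 powr (1 + s) * (2 + sqrt 2) powr s / s)
               + (\<Sum>k=1..N. c k * lam powr (s - real k))))"
  proof (intro exI[of _ "cK s ?d"] allI impI)
    fix N :: nat assume "1 \<le> N"
    have eq: "(\<lambda>(v :: 'a, \<xi>).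
            let lam = 1 + (norm \<xi>)\<^sup>2 + (norm v)\<^sup>2 / 4 in
            l1 s (v, \<xi>)
            - ((2 powr (1 + s) / s) * Gamma (1 - s) * lam powr s
               - (2 powr (1 + s) * (2 + sqrt 2) powr s / s)
               + (\<Sum>k=1..N. cK s ?d k * lam powr (s - real k))))
        = (\<lambda>z. RemF s ?d N 0 (lamf z))"
    proof
      fix z :: "'a \<times> 'a"
      obtain v \<xi> where z: "z = (v, \<xi>)" by (cases z)
      have lz: "lamf z = 1 + (norm \<xi>)\<^sup>2 + (norm v)\<^sup>2 / 4" unfolding z lamf_def by simp
      have x: "0 < lamf z" using lamf_ge1[of z] by linarith
      show "(case z of (v, \<xi>) \<Rightarrow>
            let lam = 1 + (norm \<xi>)\<^sup>2 + (norm v)\<^sup>2 / 4 in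
            l1 s (v, \<xi>)
            - ((2 powr (1 + s) / s) * Gamma (1 - s) * lam powr s
               - (2 powr (1 + s) * (2 + sqrt 2) powr s / s)
               + (\<Sum>k=1..N. cK s ?d k * lam powr (s - real k)))) = RemF s ?d N 0 (lamf z)"
        using F_identity[OF s x, of ?d N] l1_eq[of s z]
        unfolding z lz[unfolded z] RemF_0 by (simp add: Let_def)
    qed
    show "symbol_class (s - real N - 1)
         (\<lambda>(v :: 'a, \<xi>).
            let lam = 1 + (norm \<xi>)\<^sup>2 + (norm v)\<^sup>2 / 4 in
            l1 s (v, \<xi>)
            - ((2 powr (1 + s) / s) * Gamma (1 - s) * lam powr s
               - (2 powr (1 + s) * (2 + sqrt 2) powr s / s)
               + (\<Sum>k=1..N. cK s ?d k * lam powr (s - real k))))"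
      unfolding eq by (rule symbol_fam[OF fam_RemF[OF s(2)]])
  qed
qed

end
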